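(* Let $w\in\{a,b\}^*$ (with $a\ne b$) satisfy $|w|>7$ and $l(w)=6$. Let $T=\{ab^2aba^2b,\ abab^2a^2b,\ ababa^2b^2,\ a^2bab^2ab,\ a^2babab^2,\ aba^2b^2ab\}\cup\{a^{n_1}babab : n_1\ge3\}$. Then every element of $\mathtt{BR}(w)$ is rich if and only if $w$ or its complement $w^c$ belongs to $\{u,\ (u^c)^R : u\in T\}$.
   Context: For a word $w=w_1\cdots w_n$, $|w|=n$, $w^R=w_n\cdots w_1$; $w$ is a palindrome if $w=w^R$; a factor of $w$ is a word $u$ with $w=puq$. A word $w$ is rich if the number of distinct nonempty palindromic factors of $w$ equals $|w|$. The block reversal of a nonempty word $w$ is $\mathtt{BR}(w)=\{B_t\cdots B_1 : w=B_1\cdots B_t,\ t\ge1,\ \text{each } B_i \text{ nonempty}\}$. Every nonempty word has a unique run-length encoding $w=c_1^{n_1}\cdots c_k^{n_k}$ with letters $c_i\neq c_{i+1}$, $n_i\ge1$; $l(w)=k$. The complement $u^c$ of $u\in\{a,b\}^*$ is obtained by exchanging $a$ and $b$. *)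

theory Defs
  imports Main
begin

definition factors :: "'a list \<Rightarrow> 'a list set" where
  "factors w = {u. \<exists>p q. w = p @ u @ q}"

definition palindrome :: "'a list \<Rightarrow> bool" where
  "palindrome u \<longleftrightarrow> u = rev u"

definition rich :: "'a list \<Rightarrow> bool" where
  "rich w \<longleftrightarrow> card {u \<in> factors w. u \<noteq> [] \<and> palindrome u} = length w"

definition BR :: "'a list \<Rightarrow> 'a list set" where
  "BR w = {concat (rev Bs) | Bs. Bs \<noteq> [] \<and> (\<forall>B \<in> set Bs. B \<noteq> []) \<and> concat Bs = w}"

definition rle :: "'a list \<Rightarrow> ('a \<times> nat) list \<Rightarrow> bool" where
  "rle w cs \<longleftrightarrow> concat (map (\<lambda>(c, n). replicate n c) cs) = w
     \<and> (\<forall>p \<in> set cs. snd p \<ge> 1)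
     \<and> (\<forall>i. Suc i < length cs \<longrightarrow> fst (cs ! i) \<noteq> fst (cs ! Suc i))"

(* l(w): number of runs of the (unique) run-length encoding *)
definition runs :: "'a list \<Rightarrow> nat" where
  "runs w = length (THE cs. rle w cs)"

definition swap_ab :: "'a \<Rightarrow> 'a \<Rightarrow> 'a \<Rightarrow> 'a" where
  "swap_ab a b x = (if x = a then b else if x = b then a else x)"

definition compl :: "'a \<Rightarrow> 'a \<Rightarrow> 'a list \<Rightarrow> 'a list" where
  "compl a b u = map (swap_ab a b) u"

definition T_set :: "'a \<Rightarrow> 'a \<Rightarrow> 'a list set" where
  "T_set a b =
     {[a,b,b,a,b,a,a,b], [a,b,a,b,b,a,a,b], [a,b,a,b,a,a,b,b],
      [a,a,b,a,b,b,a,b], [a,a,b,a,b,a,b,b], [a,b,a,a,b,b,a,b]}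
   \<union> {replicate n1 a @ [b,a,b,a,b] | n1. n1 \<ge> 3}"

definition T_closure :: "'a \<Rightarrow> 'a \<Rightarrow> 'a list set" where
  "T_closure a b = T_set a b \<union> (\<lambda>u. rev (compl a b u)) ` T_set a b"

end

theory Submission
  imports Defs
begin


section \<open>Basic facts on factors and richness\<close>

lemma factors_iff: "u \<in> factors w \<longleftrightarrow> (\<exists>p q. w = p @ u @ q)"
  by (simp add: factors_def)

lemma factors_refl[simp]: "w \<in> factors w"
  unfolding factors_def by (rule CollectI, rule exI[of _ "[]"], rule exI[of _ "[]"]) simp

lemma factors_trans: assumes "u \<in> factors v" "v \<in> factors w" shows "u \<in> factors w"
proof -
  obtain p1 q1 where 1: "v = p1 @ u @ q1" using assms(1) by (auto simp: factors_def)
  obtain p2 q2 where 2: "w = p2 @ v @ q2" using assms(2) by (auto simp: factors_def)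
  have "w = (p2 @ p1) @ u @ (q1 @ q2)" using 1 2 by simp
  then show ?thesis unfolding factors_def by blast
qed

lemma factors_length: "u \<in> factors w \<Longrightarrow> length u \<le> length w"
  unfolding factors_def by auto

lemma factors_set: "u \<in> factors w \<Longrightarrow> set u \<subseteq> set w"
  unfolding factors_def by auto

lemma finite_factors: "finite (factors w)"
proof -
  have "factors w \<subseteq> {xs. set xs \<subseteq> set w \<and> length xs \<le> length w}"
    using factors_length factors_set by blast
  moreover have "finite {xs. set xs \<subseteq> set w \<and> length xs \<le> length w}"
    by (rule finite_lists_length_le) simp
  ultimately show ?thesis by (rule finite_subset)
qed

lemma factors_Nil: "factors [] = {[]}"
  unfolding factors_def by auto

lemma factors_snoc: "factors (w @ [c]) = factors w \<union> {s. \<exists>x. w @ [c] = x @ s}"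
proof
  show "factors (w @ [c]) \<subseteq> factors w \<union> {s. \<exists>x. w @ [c] = x @ s}"
  proof
    fix u assume "u \<in> factors (w @ [c])"
    then obtain p q where pq: "w @ [c] = p @ u @ q" by (auto simp: factors_def)
    show "u \<in> factors w \<union> {s. \<exists>x. w @ [c] = x @ s}"
    proof (cases "q = []")
      case True then show ?thesis using pq by auto
    next
      case False
      then obtain q' d where "q = q' @ [d]" by (metis rev_exhaust)
      with pq have "w = p @ u @ q'" by simp
      then show ?thesis by (auto simp: factors_def)
    qed
  qed
next
  show "factors w \<union> {s. \<exists>x. w @ [c] = x @ s} \<subseteq> factors (w @ [c])"
  proof
    fix u assume "u \<in> factors w \<union> {s. \<exists>x. w @ [c] = x @ s}"
    then show "u \<in> factors (w @ [c])"
    proof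
      assume "u \<in> factors w"
      then obtain p q where "w = p @ u @ q" by (auto simp: factors_def)
      then have "w @ [c] = p @ u @ (q @ [c])" by simp
      then show ?thesis unfolding factors_def by blast
    next
      assume "u \<in> {s. \<exists>x. w @ [c] = x @ s}"
      then obtain x where "w @ [c] = x @ u @ []" by auto
      then show ?thesis unfolding factors_def by blast
    qed
  qed
qed

definition PF :: "'a list \<Rightarrow> 'a list set" where
  "PF w = {u \<in> factors w. u \<noteq> [] \<and> palindrome u}"

lemma rich_PF: "rich w \<longleftrightarrow> card (PF w) = length w"
  by (simp add: rich_def PF_def)

lemma finite_PF: "finite (PF w)"
  by (rule finite_subset[OF _ finite_factors]) (auto simp: PF_def)

definition NP :: "'a list \<Rightarrow> 'a \<Rightarrow> 'a list set" where
  "NP w c = {s. (\<exists>x. w @ [c] = x @ s) \<and> s \<noteq> [] \<and> palindrome s \<and> s \<notin> factors w}"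

lemma PF_snoc: "PF (w @ [c]) = PF w \<union> NP w c"
  unfolding PF_def NP_def factors_snoc by auto

lemma PF_NP_disj: "PF w \<inter> NP w c = {}"
  unfolding PF_def NP_def by auto

lemma suffix_cases:
  assumes "x1 @ s1 = x2 @ (s2::'a list)" "length s1 \<le> length s2"
  shows "\<exists>t. s2 = t @ s1"
  using assms by (auto simp: append_eq_append_conv2)

lemma NP_single: assumes "s1 \<in> NP w c" "s2 \<in> NP w c" shows "s1 = s2"
proof -
  { fix s1 s2 assume A: "s1 \<in> NP w c" "s2 \<in> NP w c" "length s1 \<le> length s2"
    then obtain x1 x2 where x: "w @ [c] = x1 @ s1" "w @ [c] = x2 @ s2" and p1: "palindrome s1"
      and p2: "palindrome s2" and n1: "s1 \<notin> factors w"
      unfolding NP_def by auto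
    obtain t where t: "s2 = t @ s1" using suffix_cases[OF _ A(3), of x1 x2] x by metis
    have "s1 = s2"
    proof (cases "t = []")
      case True then show ?thesis using t by simp
    next
      case False
      have "s2 = rev s2" using p2 by (simp add: palindrome_def)
      also have "\<dots> = rev s1 @ rev t" using t by simp
      also have "rev s1 = s1" using p1 by (simp add: palindrome_def)
      finally have s2': "s2 = s1 @ rev t" .
      obtain r d where "rev t = r @ [d]" using False by (metis rev_exhaust rev_is_Nil_conv)
      with s2' x(2) have "w @ [c] = (x2 @ s1 @ r) @ [d]" by simp
      then have "w = x2 @ s1 @ r" by simp
      then have "s1 \<in> factors w" by (auto simp: factors_def)
      with n1 show ?thesis by simp
    qed }
  note * = this
  show ?thesis
  proof (cases "length s1 \<le> length s2")
    case True then show ?thesis using * assms by blast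
  next
    case False then show ?thesis using *[of s2 s1] assms by simp
  qed
qed

lemma finite_NP: "finite (NP w c)"
  by (rule finite_subset[OF _ finite_PF[of "w @ [c]"]]) (simp add: PF_snoc)

lemma card_NP: "card (NP w c) \<le> 1"
proof -
  have "\<forall>a\<in>NP w c. \<forall>b\<in>NP w c. a = b" using NP_single[of _ w c] by blast
  then have "card (NP w c) \<le> Suc 0" using card_le_Suc0_iff_eq[OF finite_NP[of w c]] by blast
  then show ?thesis by simp
qed

lemma card_PF_snoc: "card (PF (w @ [c])) = card (PF w) + card (NP w c)"
  using PF_snoc PF_NP_disj finite_PF finite_NP by (metis card_Un_disjoint)

lemma PF_Nil: "PF [] = {}"
  unfolding PF_def factors_Nil by auto

lemma card_PF_le: "card (PF w) \<le> length w"
proof (induction w rule: rev_induct)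
  case Nil then show ?case by (simp add: PF_Nil)
next
  case (snoc c w) then show ?case using card_PF_snoc[of w c] card_NP[of w c] by simp
qed

lemma rich_snoc: "rich (w @ [c]) \<longleftrightarrow> rich w \<and> NP w c \<noteq> {}"
proof -
  have e: "card (PF (w @ [c])) = card (PF w) + card (NP w c)" by (rule card_PF_snoc)
  have n1: "card (NP w c) \<le> 1" by (rule card_NP)
  have n2: "card (PF w) \<le> length w" by (rule card_PF_le)
  have n3: "NP w c \<noteq> {} \<longleftrightarrow> card (NP w c) \<noteq> 0" using finite_NP[of w c] by (simp add: card_eq_0_iff)
  show ?thesis
  proof
    assume "rich (w @ [c])"
    then have "card (PF (w @ [c])) = Suc (length w)" by (simp add: rich_PF)
    with e n1 n2 have "card (PF w) = length w" "card (NP w c) \<noteq> 0" by linarith+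
    then show "rich w \<and> NP w c \<noteq> {}" using n3 by (simp add: rich_PF)
  next
    assume "rich w \<and> NP w c \<noteq> {}"
    then have "card (PF w) = length w" "card (NP w c) \<noteq> 0" using n3 by (simp_all add: rich_PF)
    with e n1 have "card (PF (w @ [c])) = Suc (length w)" by linarith
    then show "rich (w @ [c])" by (simp add: rich_PF)
  qed
qed

lemma rich_Nil: "rich []"
  by (simp add: rich_PF PF_Nil)

lemma rich_prefix: "rich (u @ v) \<Longrightarrow> rich u"
proof (induction v rule: rev_induct)
  case Nil then show ?case by simp
next
  case (snoc c v) then show ?case using rich_snoc[of "u @ v" c] by simp
qed

lemma grow_app:
  assumes "rich w" "w @ [c] = x @ s" "s \<noteq> []" "palindrome s" "s \<notin> factors w"
  shows "rich (w @ [c])"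
proof -
  have "s \<in> NP w c" using assms unfolding NP_def by blast
  then have "NP w c \<noteq> {}" by blast
  then show ?thesis using rich_snoc[of w c] assms(1) by simp
qed

lemma factors_rev: "factors (rev w) = rev ` factors w"
proof
  show "factors (rev w) \<subseteq> rev ` factors w"
  proof
    fix u assume "u \<in> factors (rev w)"
    then obtain p q where "rev w = p @ u @ q" by (auto simp: factors_def)
    then have "w = rev (p @ u @ q)" by (metis rev_rev_ident)
    then have "w = rev q @ rev u @ rev p" by simp
    then have "rev u \<in> factors w" by (auto simp: factors_def)
    then show "u \<in> rev ` factors w" by (metis image_eqI rev_rev_ident)
  qed
next
  show "rev ` factors w \<subseteq> factors (rev w)"
  proof
    fix u assume "u \<in> rev ` factors w"
    then obtain x where x: "u = rev x" "x \<in> factors w" by blast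
    then obtain p q where "w = p @ x @ q" by (auto simp: factors_def)
    then have "rev w = rev q @ u @ rev p" using x by simp
    then show "u \<in> factors (rev w)" unfolding factors_def by blast
  qed
qed

lemma palindrome_rev[simp]: "palindrome (rev u) = palindrome u"
  unfolding palindrome_def by auto

lemma PF_rev: "PF (rev w) = rev ` PF w"
  unfolding PF_def factors_rev by auto

lemma rich_rev[simp]: "rich (rev w) = rich w"
proof -
  have "card (PF (rev w)) = card (PF w)"
    unfolding PF_rev by (rule card_image) (simp add: inj_on_def)
  then show ?thesis by (simp add: rich_PF)
qed

lemma rich_suffix: assumes "rich (u @ v)" shows "rich v"
proof -
  have "rich (rev v @ rev u)" using assms rich_rev[of "u @ v"] by simp
  then have "rich (rev v)" by (rule rich_prefix)
  then show ?thesis by simp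
qed

lemma rich_factor: "rich (p @ u @ q) \<Longrightarrow> rich u"
  using rich_prefix[of u q] rich_suffix[of p "u @ q"] by blast

lemma rich_factors: "rich w \<Longrightarrow> u \<in> factors w \<Longrightarrow> rich u"
  using rich_factor by (auto simp: factors_def)

lemma grow_pre:
  assumes "rich w" "c # w = s @ x" "s \<noteq> []" "palindrome s" "s \<notin> factors w"
  shows "rich (c # w)"
proof -
  have "rich (rev w @ [c])"
  proof (rule grow_app[where x = "rev x" and s = "rev s"])
    show "rich (rev w)" using assms by simp
    have "rev (c # w) = rev (s @ x)" using assms(2) by simp
    then show "rev w @ [c] = rev x @ rev s" by simp
    show "rev s \<noteq> []" using assms by simp
    show "palindrome (rev s)" using assms by simp
    show "rev s \<notin> factors (rev w)" using assms(5) unfolding factors_rev by auto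
  qed
  then show ?thesis using rich_rev[of "c # w"] by simp
qed

lemma factors_map: "factors (map f w) = map f ` factors w"
proof
  show "factors (map f w) \<subseteq> map f ` factors w"
  proof
    fix u assume "u \<in> factors (map f w)"
    then obtain p q where "map f w = p @ u @ q" by (auto simp: factors_def)
    then obtain p' r where r: "w = p' @ r" "p = map f p'" "u @ q = map f r"
      by (auto simp: map_eq_append_conv)
    from r(3)[symmetric] obtain u' q' where "r = u' @ q'" "u = map f u'"
      by (auto simp: map_eq_append_conv)
    with r have "w = p' @ u' @ q'" "u = map f u'" by auto
    then show "u \<in> map f ` factors w" by (auto simp: factors_def)
  qed
next
  show "map f ` factors w \<subseteq> factors (map f w)"
  proof
    fix u assume "u \<in> map f ` factors w"
    then obtain x where x: "u = map f x" "x \<in> factors w" by blast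
    then obtain p q where "w = p @ x @ q" by (auto simp: factors_def)
    then have "map f w = map f p @ u @ map f q" using x by simp
    then show "u \<in> factors (map f w)" unfolding factors_def by blast
  qed
qed

lemma rich_map:
  assumes "inj_on f (set w)"
  shows "rich (map f w) = rich w"
proof -
  have inj: "inj_on (map f) (factors w)"
  proof (rule inj_onI)
    fix x y assume xy: "x \<in> factors w" "y \<in> factors w" "map f x = map f y"
    have "inj_on f (set x \<union> set y)" using xy(1,2) factors_set assms
      by (meson inj_on_subset le_sup_iff)
    then show "x = y" using xy(3) inj_on_map_eq_map by blast
  qed
  have pal: "palindrome (map f u) = palindrome u" if "u \<in> factors w" for u
  proof -
    have "set u \<subseteq> set w" using that by (rule factors_set)
    then have "inj_on f (set u \<union> set (rev u))" using inj_on_subset[OF assms] by simp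
    then have "(map f u = map f (rev u)) = (u = rev u)" using inj_on_map_eq_map by blast
    then show ?thesis unfolding palindrome_def by (simp add: rev_map)
  qed
  have "PF (map f w) = map f ` PF w"
    unfolding PF_def factors_map using pal by auto
  moreover have "card (map f ` PF w) = card (PF w)"
    by (rule card_image) (rule inj_on_subset[OF inj], auto simp: PF_def)
  ultimately show ?thesis by (simp add: rich_PF)
qed


section \<open>Executable richness\<close>

definition isfac :: "'a list \<Rightarrow> 'a list \<Rightarrow> bool" where
  "isfac s w = list_ex (\<lambda>i. take (length s) (drop i w) = s) [0..<Suc (length w)]"

lemma isfac_iff: "isfac s w \<longleftrightarrow> s \<in> factors w"
proof
  assume "isfac s w"
  then have "\<exists>i\<in>set [0..<Suc (length w)]. take (length s) (drop i w) = s"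
    by (simp add: isfac_def list_ex_iff)
  then obtain i where i: "take (length s) (drop i w) = s" by blast
  have "w = take i w @ take (length s) (drop i w) @ drop (length s) (drop i w)"
    by (simp only: append_take_drop_id)
  then have "w = take i w @ s @ drop (length s) (drop i w)" using i by simp
  then show "s \<in> factors w" unfolding factors_def by blast
next
  assume "s \<in> factors w"
  then obtain p q where pq: "w = p @ s @ q" by (auto simp: factors_def)
  then have "length p < Suc (length w)" "take (length s) (drop (length p) w) = s" by simp_all
  then show "isfac s w" unfolding isfac_def list_ex_iff by force
qed

definition newp :: "'a list \<Rightarrow> bool" where
  "newp u = list_ex (\<lambda>k. drop k u \<noteq> [] \<and> drop k u = rev (drop k u) \<and> \<not> isfac (drop k u) (butlast u))
     [0..<length u]"

lemma newp_iff: "newp (w @ [c]) \<longleftrightarrow> NP w c \<noteq> {}"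
proof
  assume "newp (w @ [c])"
  then have "\<exists>k\<in>set [0..<length (w @ [c])]. drop k (w @ [c]) \<noteq> [] \<and>
     drop k (w @ [c]) = rev (drop k (w @ [c])) \<and> \<not> isfac (drop k (w @ [c])) (butlast (w @ [c]))"
    unfolding newp_def list_ex_iff by blast
  then obtain k where k: "drop k (w @ [c]) \<noteq> []"
    "drop k (w @ [c]) = rev (drop k (w @ [c]))" "\<not> isfac (drop k (w @ [c])) (butlast (w @ [c]))"
    by blast
  have "w @ [c] = take k (w @ [c]) @ drop k (w @ [c])" by (rule append_take_drop_id[symmetric])
  moreover have "butlast (w @ [c]) = w" by simp
  ultimately have "drop k (w @ [c]) \<in> NP w c" using k unfolding NP_def palindrome_def isfac_iff
    by (metis (mono_tags, lifting) mem_Collect_eq)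
  then show "NP w c \<noteq> {}" by blast
next
  assume "NP w c \<noteq> {}"
  then obtain s x where s: "w @ [c] = x @ s" "s \<noteq> []" "palindrome s" "s \<notin> factors w"
    unfolding NP_def by blast
  have "length x < length (w @ [c])" using s(1,2) by (metis length_append less_add_same_cancel1 length_greater_0_conv)
  moreover have "drop (length x) (w @ [c]) = s" using s(1) by simp
  moreover have "butlast (w @ [c]) = w" by simp
  ultimately have "length x \<in> set [0..<length (w @ [c])] \<and> drop (length x) (w @ [c]) \<noteq> [] \<and>
     drop (length x) (w @ [c]) = rev (drop (length x) (w @ [c])) \<and>
     \<not> isfac (drop (length x) (w @ [c])) (butlast (w @ [c]))"
    using s unfolding palindrome_def isfac_iff by simp
  then show "newp (w @ [c])" unfolding newp_def list_ex_iff by blast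
qed

definition richc :: "'a list \<Rightarrow> bool" where
  "richc w = list_all (\<lambda>n. newp (take (Suc n) w)) [0..<length w]"

lemma richc_snoc: "richc (w @ [c]) = (richc w \<and> newp (w @ [c]))"
proof -
  have "[0..<length (w @ [c])] = [0..<length w] @ [length w]" by simp
  then have "richc (w @ [c]) = (list_all (\<lambda>n. newp (take (Suc n) (w @ [c]))) [0..<length w]
       \<and> newp (take (Suc (length w)) (w @ [c])))"
    unfolding richc_def by simp
  also have "list_all (\<lambda>n. newp (take (Suc n) (w @ [c]))) [0..<length w]
      = list_all (\<lambda>n. newp (take (Suc n) w)) [0..<length w]"
    by (rule list_all_cong) auto
  finally show ?thesis by (simp add: richc_def)
qed

lemma rich_richc: "rich w = richc w"
proof (induction w rule: rev_induct)
  case Nil then show ?case by (simp add: rich_Nil richc_def)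
next
  case (snoc c w) then show ?case by (simp add: rich_snoc richc_snoc newp_iff)
qed

section \<open>Block reversal\<close>

lemma BR_intro: "Bs \<noteq> [] \<Longrightarrow> \<forall>B\<in>set Bs. B \<noteq> [] \<Longrightarrow> concat Bs = w \<Longrightarrow> concat (rev Bs) \<in> BR w"
  unfolding BR_def by blast

lemma concat_filter_ne: "concat (filter (\<lambda>B. B \<noteq> []) L) = concat L"
  by (induct L) auto

lemma witness:
  assumes "w = X @ C @ g @ M @ g' @ A @ Y" "C \<noteq> []" "A \<noteq> []" "\<not> rich (A @ M @ C)"
  shows "\<exists>v\<in>BR w. \<not> rich v"
proof -
  define L where "L = [X, C @ g, M, g' @ A, Y]"
  define Bs where "Bs = filter (\<lambda>B. B \<noteq> []) L"
  have "concat Bs = w" using assms(1) unfolding Bs_def concat_filter_ne L_def by simp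
  moreover have "Bs \<noteq> []" using assms(2) unfolding Bs_def L_def by simp
  moreover have "\<forall>B\<in>set Bs. B \<noteq> []" unfolding Bs_def by simp
  ultimately have "concat (rev Bs) \<in> BR w" using BR_intro[of Bs w] by blast
  moreover have "concat (rev Bs) = (Y @ g') @ (A @ M @ C) @ (g @ X)"
    unfolding Bs_def rev_filter[symmetric] concat_filter_ne L_def by simp
  moreover have "\<not> rich ((Y @ g') @ (A @ M @ C) @ (g @ X))"
    using assms(4) rich_factor by blast
  ultimately show ?thesis by metis
qed

lemma BR_rev: assumes "v \<in> BR w" shows "rev v \<in> BR (rev w)"
proof -
  obtain Bs where Bs: "v = concat (rev Bs)" "Bs \<noteq> []" "\<forall>B\<in>set Bs. B \<noteq> []" "concat Bs = w"
    using assms unfolding BR_def by blast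
  define Cs where "Cs = rev (map rev Bs)"
  have "concat Cs = rev w" unfolding Cs_def Bs(4)[symmetric] by (simp add: rev_concat rev_map)
  moreover have "Cs \<noteq> []" "\<forall>B\<in>set Cs. B \<noteq> []" unfolding Cs_def using Bs(2,3) by auto
  ultimately have "concat (rev Cs) \<in> BR (rev w)" using BR_intro by blast
  moreover have "concat (rev Cs) = rev v" unfolding Cs_def Bs(1) by (simp add: rev_concat rev_map)
  ultimately show ?thesis by simp
qed

fun bp :: "'a list \<Rightarrow> ('a list \<times> 'a list) list" where
  "bp [] = []"
| "bp [x] = [([], [x])]"
| "bp (x # y # ys) = concat (map (\<lambda>(u, B). [(u @ B, [x]), (u, x # B)]) (bp (y # ys)))"

definition parts :: "'a list \<Rightarrow> 'a list list set" where
  "parts w = {Bs. Bs \<noteq> [] \<and> (\<forall>B\<in>set Bs. B \<noteq> []) \<and> concat Bs = w}"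

lemma parts_single: "parts [x] = {[[x]]}"
proof
  show "parts [x] \<subseteq> {[[x]]}"
  proof
    fix Bs assume "Bs \<in> parts [x]"
    then obtain B R where BR: "Bs = B # R" "B \<noteq> []" "\<forall>C\<in>set R. C \<noteq> []" "B @ concat R = [x]"
      unfolding parts_def by (cases Bs) auto
    then have "B = [x]" "concat R = []" by (cases B; auto)+
    then have "R = []" using BR(3) by (cases R) auto
    then show "Bs \<in> {[[x]]}" using BR \<open>B = [x]\<close> by simp
  qed
qed (auto simp: parts_def)

lemma parts_Cons:
  assumes "w \<noteq> []"
  shows "Bs \<in> parts (x # w) \<longleftrightarrow>
    (\<exists>Cs \<in> parts w. Bs = [x] # Cs \<or> Bs = (x # hd Cs) # tl Cs)"
proof
  assume "Bs \<in> parts (x # w)"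
  then obtain B R where BR: "Bs = B # R" "B \<noteq> []" "\<forall>C\<in>set R. C \<noteq> []" "B @ concat R = x # w"
    unfolding parts_def by (cases Bs) auto
  then obtain B' where B': "B = x # B'" "B' @ concat R = w" by (cases B) auto
  show "\<exists>Cs \<in> parts w. Bs = [x] # Cs \<or> Bs = (x # hd Cs) # tl Cs"
  proof (cases "B' = []")
    case True
    then have "R \<in> parts w" using B' BR assms unfolding parts_def by auto
    then show ?thesis using BR B' True by auto
  next
    case False
    then have "B' # R \<in> parts w" using B' BR unfolding parts_def by auto
    then show ?thesis using BR B' by (intro bexI[of _ "B' # R"]) auto
  qed
next
  assume "\<exists>Cs \<in> parts w. Bs = [x] # Cs \<or> Bs = (x # hd Cs) # tl Cs"
  then obtain Cs where Cs: "Cs \<in> parts w" "Bs = [x] # Cs \<or> Bs = (x # hd Cs) # tl Cs" by blast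
  then obtain C R where CR: "Cs = C # R" unfolding parts_def by (cases Cs) auto
  show "Bs \<in> parts (x # w)" using Cs CR unfolding parts_def by auto
qed

lemma bp_parts: "w \<noteq> [] \<Longrightarrow> set (bp w) = (\<lambda>Bs. (concat (rev (tl Bs)), hd Bs)) ` parts w"
proof (induction w rule: bp.induct)
  case 1 then show ?case by simp
next
  case (2 x) then show ?case by (simp add: parts_single)
next
  case (3 x y ys)
  have IH: "set (bp (y # ys)) = (\<lambda>Bs. (concat (rev (tl Bs)), hd Bs)) ` parts (y # ys)"
    using 3 by simp
  have ne: "\<And>Cs. Cs \<in> parts (y # ys) \<Longrightarrow> Cs \<noteq> []" unfolding parts_def by auto
  show ?case
  proof
    show "set (bp (x # y # ys)) \<subseteq> (\<lambda>Bs. (concat (rev (tl Bs)), hd Bs)) ` parts (x # y # ys)"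
    proof
      fix p assume "p \<in> set (bp (x # y # ys))"
      then obtain Cs where Cs: "Cs \<in> parts (y # ys)"
        "p = (concat (rev (tl Cs)) @ hd Cs, [x]) \<or> p = (concat (rev (tl Cs)), x # hd Cs)"
        using IH by auto
      have Cne: "Cs \<noteq> []" using ne Cs(1) by blast
      show "p \<in> (\<lambda>Bs. (concat (rev (tl Bs)), hd Bs)) ` parts (x # y # ys)"
        using Cs(2)
      proof
        assume p: "p = (concat (rev (tl Cs)) @ hd Cs, [x])"
        have "[x] # Cs \<in> parts (x # y # ys)" using parts_Cons[of "y # ys" "[x] # Cs" x] Cs(1) by auto
        moreover have "p = (concat (rev (tl ([x] # Cs))), hd ([x] # Cs))"
          using p Cne by (cases Cs) auto
        ultimately show ?thesis by blast
      next
        assume p: "p = (concat (rev (tl Cs)), x # hd Cs)"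
        have "(x # hd Cs) # tl Cs \<in> parts (x # y # ys)"
          using parts_Cons[of "y # ys" "(x # hd Cs) # tl Cs" x] Cs(1) by auto
        moreover have "p = (concat (rev (tl ((x # hd Cs) # tl Cs))), hd ((x # hd Cs) # tl Cs))"
          using p by simp
        ultimately show ?thesis by blast
      qed
    qed
  next
    show "(\<lambda>Bs. (concat (rev (tl Bs)), hd Bs)) ` parts (x # y # ys) \<subseteq> set (bp (x # y # ys))"
    proof
      fix p assume "p \<in> (\<lambda>Bs. (concat (rev (tl Bs)), hd Bs)) ` parts (x # y # ys)"
      then obtain Bs where Bs: "Bs \<in> parts (x # y # ys)" "p = (concat (rev (tl Bs)), hd Bs)" by blast
      then obtain Cs where Cs: "Cs \<in> parts (y # ys)" "Bs = [x] # Cs \<or> Bs = (x # hd Cs) # tl Cs"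
        using parts_Cons[of "y # ys" Bs x] by auto
      have Cne: "Cs \<noteq> []" using ne Cs(1) by blast
      have mem: "(concat (rev (tl Cs)), hd Cs) \<in> set (bp (y # ys))" using IH Cs(1) by blast
      have "concat (rev Cs) = concat (rev (tl Cs)) @ hd Cs" using Cne by (cases Cs) auto
      then show "p \<in> set (bp (x # y # ys))" using Cs(2) Bs(2) mem by (auto intro!: bexI[OF _ mem])
    qed
  qed
qed

lemma BR_bp: assumes "w \<noteq> []" shows "BR w = (\<lambda>(u, B). u @ B) ` set (bp w)"
proof -
  have "BR w = (\<lambda>Bs. concat (rev Bs)) ` parts w" unfolding BR_def parts_def by blast
  also have "\<dots> = (\<lambda>(u, B). u @ B) ` ((\<lambda>Bs. (concat (rev (tl Bs)), hd Bs)) ` parts w)"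
    unfolding image_image
  proof (rule image_cong[OF refl])
    fix Bs assume "Bs \<in> parts w"
    then have "Bs \<noteq> []" unfolding parts_def by auto
    then show "concat (rev Bs) = (case (concat (rev (tl Bs)), hd Bs) of (u, B) \<Rightarrow> u @ B)"
      by (cases Bs) auto
  qed
  finally show ?thesis using bp_parts[OF assms] by simp
qed

lemma bp_map: "bp (map f w) = map (\<lambda>(u, B). (map f u, map f B)) (bp w)"
  by (induction w rule: bp.induct) (auto simp: map_concat case_prod_beta comp_def)

lemma BR_map: assumes "w \<noteq> []" shows "BR (map f w) = map f ` BR w"
proof -
  have "BR (map f w) = (\<lambda>(u, B). u @ B) ` set (bp (map f w))" using assms by (simp add: BR_bp)
  also have "\<dots> = map f ` ((\<lambda>(u, B). u @ B) ` set (bp w))"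
    unfolding bp_map set_map image_image by (rule image_cong) (auto simp: case_prod_beta)
  finally show ?thesis using BR_bp[OF assms] by simp
qed


section \<open>Words as exponent lists\<close>

fun enc :: "'a \<Rightarrow> 'a \<Rightarrow> nat list \<Rightarrow> 'a list" where
  "enc a b [] = []"
| "enc a b [e] = replicate e a"
| "enc a b (e # e' # es) = replicate e a @ b # enc a b (e' # es)"

fun pm :: "nat list \<Rightarrow> nat list \<Rightarrow> bool" where
  "pm [] es = True"
| "pm [f] [] = False"
| "pm [f] (e # es) = (f \<le> e)"
| "pm (f # f' # fs) [] = False"
| "pm (f # f' # fs) (e # es) = (f = e \<and> pm (f' # fs) es)"

fun occ :: "nat list \<Rightarrow> nat list \<Rightarrow> bool" where
  "occ fs [] = False"
| "occ [] (e # es) = True"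
| "occ [f] (e # es) = (f \<le> e \<or> occ [f] es)"
| "occ (f # f' # fs) (e # es) = ((f \<le> e \<and> pm (f' # fs) es) \<or> occ (f # f' # fs) es)"

lemma enc_Cons: "ys \<noteq> [] \<Longrightarrow> enc a b (x # ys) = replicate x a @ b # enc a b ys"
  by (cases ys) auto

lemma enc_append: "xs \<noteq> [] \<Longrightarrow> ys \<noteq> [] \<Longrightarrow> enc a b (xs @ ys) = enc a b xs @ b # enc a b ys"
proof (induction xs)
  case Nil then show ?case by simp
next
  case (Cons x xs)
  show ?case
  proof (cases "xs = []")
    case True then show ?thesis using Cons by (simp add: enc_Cons)
  next
    case False
    then have "enc a b (x # xs @ ys) = replicate x a @ b # enc a b (xs @ ys)"
      using Cons by (simp add: enc_Cons)
    also have "\<dots> = replicate x a @ b # enc a b xs @ b # enc a b ys" using Cons False by simp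
    also have "\<dots> = enc a b (x # xs) @ b # enc a b ys" using False by (simp add: enc_Cons)
    finally show ?thesis by simp
  qed
qed

lemma b_notin_rep: "a \<noteq> b \<Longrightarrow> b \<notin> set (replicate e a)"
  by simp

lemma rep_b_eq:
  assumes "a \<noteq> b" "replicate f a @ b # X = replicate j a @ b # Y"
  shows "f = j \<and> X = Y"
  using assms(2)
proof (induction f arbitrary: j)
  case 0 then show ?case using assms(1) by (cases j) auto
next
  case (Suc f) then show ?case using assms(1) by (cases j) auto
qed

lemma b_in_enc: "length fs \<ge> 2 \<Longrightarrow> b \<in> set (enc a b fs)"
  by (induction a b fs rule: enc.induct) auto

lemma enc_single_set: "set (enc a b [e]) \<subseteq> {a}"
  by auto

lemma enc_dec:
  assumes "a \<noteq> b" "enc a b fs = replicate j a @ b # y"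
  shows "\<exists>f fs'. fs = f # fs' \<and> f = j \<and> fs' \<noteq> [] \<and> y = enc a b fs'"
proof (cases fs)
  case Nil then show ?thesis using assms by simp
next
  case (Cons f fs')
  show ?thesis
  proof (cases "fs' = []")
    case True
    then have "b \<in> set (replicate f a)" using assms Cons by simp
    then show ?thesis using assms by simp
  next
    case False
    then have "replicate f a @ b # enc a b fs' = replicate j a @ b # y"
      using assms Cons by (simp add: enc_Cons)
    then show ?thesis using rep_b_eq[OF assms(1)] Cons False by blast
  qed
qed

lemma rep_prefix_iff:
  assumes "a \<noteq> b" "Z = [] \<or> hd Z = b"
  shows "(\<exists>y. replicate e a @ Z = replicate f a @ y) \<longleftrightarrow> f \<le> e"
proof
  assume "\<exists>y. replicate e a @ Z = replicate f a @ y"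
  then obtain y where y: "replicate e a @ Z = replicate f a @ y" by blast
  show "f \<le> e"
  proof (rule ccontr)
    assume "\<not> f \<le> e"
    then have "f = e + Suc (f - e - 1)" by simp
    then have "replicate f a = replicate e a @ a # replicate (f - e - 1) a"
      by (metis replicate_Suc replicate_add)
    then have "Z = a # replicate (f - e - 1) a @ y" using y by simp
    then show False using assms by simp
  qed
next
  assume "f \<le> e"
  then have "replicate e a = replicate f a @ replicate (e - f) a" by (metis le_add_diff_inverse replicate_add)
  then show "\<exists>y. replicate e a @ Z = replicate f a @ y" by auto
qed

lemma enc_Cons_Cons: "enc a b (e # e' # es) = replicate e a @ b # enc a b (e' # es)"
  by simp

lemma enc_prefix:
  assumes "a \<noteq> b" "fs \<noteq> []" "es \<noteq> []"
  shows "(\<exists>y. enc a b es = enc a b fs @ y) \<longleftrightarrow> pm fs es"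
  using assms(2,3)
proof (induction fs es rule: pm.induct)
  case (1 es) then show ?case by simp
next
  case (2 f) then show ?case by simp
next
  case (3 f e es)
  show ?case
  proof (cases es)
    case Nil then show ?thesis using rep_prefix_iff[OF assms(1), of "[]" e f] by simp
  next
    case (Cons e' es')
    then show ?thesis using rep_prefix_iff[OF assms(1), of "b # enc a b (e' # es')" e f] by simp
  qed
next
  case (4 f f' fs) then show ?case by simp
next
  case (5 f f' fs e es)
  show ?case
  proof (cases es)
    case Nil
    have "b \<in> set (enc a b (f # f' # fs))" by (rule b_in_enc) simp
    have "\<not> (\<exists>y. replicate e a = enc a b (f # f' # fs) @ y)"
    proof
      assume "\<exists>y. replicate e a = enc a b (f # f' # fs) @ y"
      then obtain y where "replicate e a = enc a b (f # f' # fs) @ y" by blast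
      then have "b \<in> set (replicate e a)" using \<open>b \<in> set (enc a b (f # f' # fs))\<close> by simp
      then show False using assms(1) by simp
    qed
    then show ?thesis using Nil by (cases fs) auto
  next
    case (Cons e' es')
    have "(\<exists>y. enc a b (e # e' # es') = enc a b (f # f' # fs) @ y) \<longleftrightarrow>
          (f = e \<and> (\<exists>y. enc a b (e' # es') = enc a b (f' # fs) @ y))"
    proof
      assume "\<exists>y. enc a b (e # e' # es') = enc a b (f # f' # fs) @ y"
      then obtain y where "replicate e a @ b # enc a b (e' # es') = replicate f a @ b # (enc a b (f' # fs) @ y)"
        by auto
      then show "f = e \<and> (\<exists>y. enc a b (e' # es') = enc a b (f' # fs) @ y)"
        using rep_b_eq[OF assms(1)] by metis
    qed auto
    moreover have "(\<exists>y. enc a b (e' # es') = enc a b (f' # fs) @ y) \<longleftrightarrow> pm (f' # fs) (e' # es')"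
      using 5 Cons by simp
    ultimately show ?thesis using Cons by simp
  qed
qed

lemma factors_Cons_split:
  "u \<in> factors (X @ c # Y) \<longleftrightarrow> u \<in> factors X \<or> u \<in> factors Y \<or>
     (\<exists>x1 y1. u = x1 @ c # y1 \<and> (\<exists>p. X = p @ x1) \<and> (\<exists>q. Y = y1 @ q))"
proof
  assume "u \<in> factors (X @ c # Y)"
  then obtain p q where pq: "X @ c # Y = p @ u @ q" by (auto simp: factors_def)
  have tX: "X = take (length X) (p @ u @ q)" using pq by (metis append_eq_conv_conj)
  have dX: "c # Y = drop (length X) (p @ u @ q)" using pq by (metis append_eq_conv_conj)
  show "u \<in> factors X \<or> u \<in> factors Y \<or>
     (\<exists>x1 y1. u = x1 @ c # y1 \<and> (\<exists>p. X = p @ x1) \<and> (\<exists>q. Y = y1 @ q))"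
  proof (cases "length p + length u \<le> length X")
    case True
    then have "X = p @ u @ take (length X - length p - length u) q" using tX by simp
    then have "u \<in> factors X" unfolding factors_def by blast
    then show ?thesis by blast
  next
    case F: False
    show ?thesis
    proof (cases "length p > length X")
      case True
      then have "c # Y = drop (length X) p @ u @ q" using dX by simp
      moreover have "drop (length X) p \<noteq> []" using True by simp
      ultimately obtain r where "Y = r @ u @ q" by (cases "drop (length X) p") auto
      then have "u \<in> factors Y" unfolding factors_def by blast
      then show ?thesis by blast
    next
      case False
      define k where "k = length X - length p"
      have k: "k < length u" "length p + k = length X" using F False unfolding k_def by auto
      have "X = p @ take k u" using tX k unfolding k_def by simp
      moreover have "c # Y = drop k u @ q" using dX k unfolding k_def by simp
      moreover have "drop k u \<noteq> []" using k by simp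
      ultimately obtain y1 where y1: "drop k u = c # y1" "Y = y1 @ q"
        by (cases "drop k u") auto
      have "u = take k u @ c # y1" using y1(1) by (metis append_take_drop_id)
      then show ?thesis using \<open>X = p @ take k u\<close> y1(2) by blast
    qed
  qed
next
  assume "u \<in> factors X \<or> u \<in> factors Y \<or>
     (\<exists>x1 y1. u = x1 @ c # y1 \<and> (\<exists>p. X = p @ x1) \<and> (\<exists>q. Y = y1 @ q))"
  then show "u \<in> factors (X @ c # Y)"
  proof (elim disjE exE conjE)
    assume "u \<in> factors X"
    then obtain p q where "X = p @ u @ q" by (auto simp: factors_def)
    then have "X @ c # Y = p @ u @ (q @ c # Y)" by simp
    then show ?thesis unfolding factors_def by blast
  next
    assume "u \<in> factors Y"
    then obtain p q where "Y = p @ u @ q" by (auto simp: factors_def)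
    then have "X @ c # Y = (X @ c # p) @ u @ q" by simp
    then show ?thesis unfolding factors_def by blast
  next
    fix x1 y1 p q assume "u = x1 @ c # y1" "X = p @ x1" "Y = y1 @ q"
    then have "X @ c # Y = p @ u @ q" by simp
    then show ?thesis unfolding factors_def by blast
  qed
qed

lemma factors_replicate: "u \<in> factors (replicate e a) \<longleftrightarrow> (\<exists>j\<le>e. u = replicate j a)"
proof
  assume A: "u \<in> factors (replicate e a)"
  then have "set u \<subseteq> {a}" using factors_set[OF A] by auto
  then have "u = replicate (length u) a" by (simp add: replicate_length_same subset_singleton_iff
      subset_iff)
  moreover have "length u \<le> e" using factors_length[OF A] by simp
  ultimately show "\<exists>j\<le>e. u = replicate j a" by blast
next
  assume "\<exists>j\<le>e. u = replicate j a"
  then obtain j where j: "j \<le> e" "u = replicate j a" by blast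
  then have "replicate e a = [] @ u @ replicate (e - j) a" by (simp add: replicate_add[symmetric])
  then show "u \<in> factors (replicate e a)" unfolding factors_def by blast
qed

lemma suffix_replicate: "(\<exists>p. replicate e a = p @ x) \<longleftrightarrow> (\<exists>j\<le>e. x = replicate j a)"
proof
  assume "\<exists>p. replicate e a = p @ x"
  then obtain p where p: "replicate e a = p @ x" by blast
  then have "replicate e a = p @ x @ []" by simp
  then have "x \<in> factors (replicate e a)" unfolding factors_def by blast
  then show "\<exists>j\<le>e. x = replicate j a" by (simp add: factors_replicate)
next
  assume "\<exists>j\<le>e. x = replicate j a"
  then obtain j where "j \<le> e" "x = replicate j a" by blast
  then have "replicate e a = replicate (e - j) a @ x" by (simp add: replicate_add[symmetric])
  then show "\<exists>p. replicate e a = p @ x" by blast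
qed

lemma enc_eq_rep: assumes "a \<noteq> b" "fs \<noteq> []" shows "enc a b fs = replicate j a \<longleftrightarrow> fs = [j]"
proof
  assume A: "enc a b fs = replicate j a"
  obtain f fs' where fs: "fs = f # fs'" using assms(2) by (cases fs) auto
  show "fs = [j]"
  proof (cases "fs' = []")
    case True then show ?thesis using A fs by simp
  next
    case False
    then have "b \<in> set (enc a b fs)" using fs by (simp add: enc_Cons)
    then show ?thesis using A assms(1) by simp
  qed
qed simp

lemma pm_Nil2: assumes "pm fs []" shows "fs = []"
proof (cases fs)
  case (Cons f r) then show ?thesis using assms by (cases r) auto
qed simp

lemma enc_factor:
  assumes "a \<noteq> b" "fs \<noteq> []" "es \<noteq> []"
  shows "enc a b fs \<in> factors (enc a b es) \<longleftrightarrow> occ fs es"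
  using assms(3)
proof (induction es)
  case Nil then show ?case by simp
next
  case (Cons e es0)
  show ?case
  proof (cases es0)
  case Nil
  have "enc a b fs \<in> factors (enc a b [e]) \<longleftrightarrow> (\<exists>j\<le>e. fs = [j])"
    by (simp add: factors_replicate enc_eq_rep[OF assms(1,2)])
  also have "\<dots> \<longleftrightarrow> occ fs [e]"
  proof -
    obtain f r where fr: "fs = f # r" using assms(2) by (cases fs) auto
    show ?thesis unfolding fr by (cases r) (auto dest: pm_Nil2)
  qed
  finally show ?thesis using Nil by simp
next
  case (Cons e' es)
  have IH: "enc a b fs \<in> factors (enc a b (e' # es)) \<longleftrightarrow> occ fs (e' # es)" using Cons.IH Cons by simp
  have s1: "enc a b fs \<in> factors (enc a b (e # e' # es)) \<longleftrightarrow>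
     enc a b fs \<in> factors (replicate e a) \<or> enc a b fs \<in> factors (enc a b (e' # es)) \<or>
     (\<exists>x1 y1. enc a b fs = x1 @ b # y1 \<and> (\<exists>p. replicate e a = p @ x1) \<and> (\<exists>q. enc a b (e' # es) = y1 @ q))"
    by (simp add: factors_Cons_split)
  have s2: "(enc a b fs \<in> factors (replicate e a)) \<longleftrightarrow> (\<exists>f. fs = [f] \<and> f \<le> e)"
    by (simp add: factors_replicate enc_eq_rep[OF assms(1,2)] conj_commute)
  have s3: "(\<exists>x1 y1. enc a b fs = x1 @ b # y1 \<and> (\<exists>p. replicate e a = p @ x1) \<and> (\<exists>q. enc a b (e' # es) = y1 @ q))
     \<longleftrightarrow> (\<exists>f fs'. fs = f # fs' \<and> fs' \<noteq> [] \<and> f \<le> e \<and> pm fs' (e' # es))"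
  proof
    assume "\<exists>x1 y1. enc a b fs = x1 @ b # y1 \<and> (\<exists>p. replicate e a = p @ x1) \<and> (\<exists>q. enc a b (e' # es) = y1 @ q)"
    then obtain x1 y1 q where X: "enc a b fs = x1 @ b # y1" "\<exists>p. replicate e a = p @ x1"
      "enc a b (e' # es) = y1 @ q" by blast
    have "\<exists>j\<le>e. x1 = replicate j a" using X(2) suffix_replicate[of e a x1] by simp
    then obtain j where j: "j \<le> e" "x1 = replicate j a" by blast
    have "enc a b fs = replicate j a @ b # y1" using X(1) j(2) by simp
    from enc_dec[OF assms(1) this] obtain f fs' where "fs = f # fs'" "f = j" "fs' \<noteq> []" "y1 = enc a b fs'"
      by blast
    moreover have "pm fs' (e' # es)" using enc_prefix[OF assms(1) \<open>fs' \<noteq> []\<close>, of "e' # es"] X(3)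
      \<open>y1 = enc a b fs'\<close> by auto
    ultimately show "\<exists>f fs'. fs = f # fs' \<and> fs' \<noteq> [] \<and> f \<le> e \<and> pm fs' (e' # es)" using j by blast
  next
    assume "\<exists>f fs'. fs = f # fs' \<and> fs' \<noteq> [] \<and> f \<le> e \<and> pm fs' (e' # es)"
    then obtain f fs' where F: "fs = f # fs'" "fs' \<noteq> []" "f \<le> e" "pm fs' (e' # es)" by blast
    then obtain q where q: "enc a b (e' # es) = enc a b fs' @ q"
      using enc_prefix[OF assms(1) F(2), of "e' # es"] by auto
    have "enc a b fs = replicate f a @ b # enc a b fs'" using F(1,2) by (cases fs') auto
    moreover have "\<exists>p. replicate e a = p @ replicate f a" using suffix_replicate[of e a "replicate f a"] F(3) by auto
    ultimately show "\<exists>x1 y1. enc a b fs = x1 @ b # y1 \<and> (\<exists>p. replicate e a = p @ x1) \<and> (\<exists>q. enc a b (e' # es) = y1 @ q)"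
      using q by blast
  qed
  have *: "enc a b fs \<in> factors (enc a b (e # e' # es)) \<longleftrightarrow>
     (\<exists>f. fs = [f] \<and> f \<le> e) \<or> occ fs (e' # es) \<or> (\<exists>f fs'. fs = f # fs' \<and> fs' \<noteq> [] \<and> f \<le> e \<and> pm fs' (e' # es))"
    using IH s1 s2 s3 by simp
  obtain f r where fr: "fs = f # r" using assms(2) by (cases fs) auto
  have "((\<exists>f. fs = [f] \<and> f \<le> e) \<or> occ fs (e' # es) \<or> (\<exists>f fs'. fs = f # fs' \<and> fs' \<noteq> [] \<and> f \<le> e \<and> pm fs' (e' # es)))
     \<longleftrightarrow> occ fs (e # e' # es)" unfolding fr by (cases r) auto
  then show ?thesis using * Cons by simp
qed
qed

lemma rev_enc: "rev (enc a b es) = enc a b (rev es)"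
proof (induction es)
  case (Cons e es)
  show ?case
  proof (cases "es = []")
    case True then show ?thesis by simp
  next
    case False
    have "rev (enc a b (e # es)) = rev (enc a b es) @ b # replicate e a" using False by (simp add: enc_Cons)
    also have "\<dots> = enc a b (rev es) @ b # enc a b [e]" using Cons by simp
    also have "\<dots> = enc a b (rev es @ [e])" by (rule enc_append[symmetric]) (use False in auto)
    finally show ?thesis by simp
  qed
qed simp

lemma pal_enc: "rev fs = fs \<Longrightarrow> palindrome (enc a b fs)"
  unfolding palindrome_def by (metis rev_enc)

lemma enc_suffix:
  assumes "a \<noteq> b" "fs \<noteq> []" "es \<noteq> []" "pm (rev fs) (rev es)"
  shows "\<exists>x. enc a b es = x @ enc a b fs"
proof -
  obtain y where "enc a b (rev es) = enc a b (rev fs) @ y"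
    using enc_prefix[OF assms(1), of "rev fs" "rev es"] assms by auto
  then have "rev (enc a b es) = rev (enc a b fs) @ y" by (simp add: rev_enc)
  then have "enc a b es = rev y @ enc a b fs" by (metis rev_append rev_rev_ident)
  then show ?thesis by blast
qed

lemma grow_app_enc:
  assumes "a \<noteq> b" "rich (enc a b es)" "es \<noteq> []" "fs \<noteq> []" "enc a b es @ [c] = enc a b es'"
    "pm fs (rev es')" "rev fs = fs" "enc a b fs \<noteq> []" "\<not> occ fs es"
  shows "rich (enc a b es')"
proof -
  have "es' \<noteq> []" using assms(6,4) pm_Nil2 by (metis rev.simps(1))
  then obtain x where x: "enc a b es' = x @ enc a b fs"
    using enc_suffix[OF assms(1,4)] assms(6,7) by metis
  have "rich (enc a b es @ [c])"
    by (rule grow_app[OF assms(2) _ assms(8)]) (use assms x pal_enc enc_factor[OF assms(1,4,3)] in auto)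
  then show ?thesis using assms(5) by simp
qed

lemma grow_pre_enc:
  assumes "a \<noteq> b" "rich (enc a b es)" "es \<noteq> []" "fs \<noteq> []" "c # enc a b es = enc a b es'"
    "pm fs es'" "rev fs = fs" "enc a b fs \<noteq> []" "\<not> occ fs es"
  shows "rich (enc a b es')"
proof -
  have "es' \<noteq> []" using assms(6,4) pm_Nil2 by (metis rev.simps(1))
  then obtain y where y: "enc a b es' = enc a b fs @ y"
    using enc_prefix[OF assms(1,4)] assms(6) by metis
  have "rich (c # enc a b es)"
    by (rule grow_pre[OF assms(2) _ assms(8)]) (use assms y pal_enc enc_factor[OF assms(1,4,3)] in auto)
  then show ?thesis using assms(5) by simp
qed


section \<open>Richness of the parametric families\<close>

context
  fixes a b :: 'x
  assumes ab: "a \<noteq> b"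
begin

lemma rA: "rich (enc a b es) \<Longrightarrow> es \<noteq> [] \<Longrightarrow> fs \<noteq> [] \<Longrightarrow> enc a b es @ [c] = enc a b es' \<Longrightarrow>
    pm fs (rev es') \<Longrightarrow> rev fs = fs \<Longrightarrow> enc a b fs \<noteq> [] \<Longrightarrow> \<not> occ fs es \<Longrightarrow> rich (enc a b es')"
  using grow_app_enc[OF ab] by blast

lemma rP: "rich (enc a b es) \<Longrightarrow> es \<noteq> [] \<Longrightarrow> fs \<noteq> [] \<Longrightarrow> c # enc a b es = enc a b es' \<Longrightarrow>
    pm fs es' \<Longrightarrow> rev fs = fs \<Longrightarrow> enc a b fs \<noteq> [] \<Longrightarrow> \<not> occ fs es \<Longrightarrow> rich (enc a b es')"
  using grow_pre_enc[OF ab] by blast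

lemma core: "rich (enc a b [r])"
proof (induction r)
  case 0 then show ?case by (simp add: rich_Nil)
next
  case (Suc r) then show ?case
    by (rule rA[where fs = "[Suc r]" and c = a]) (simp_all add: replicate_append_same)
qed

lemma famX: "rich (enc a b [r, s])"
proof (induction s)
  case 0 show ?case
    by (rule rA[OF core[of r], where fs = "[0, 0]" and c = b]) simp_all
next
  case (Suc s)
  show ?case
  proof (cases "Suc s \<le> r")
    case True then show ?thesis
      by (intro rA[OF Suc, where fs = "[Suc s, Suc s]" and c = a]) (simp_all add: replicate_append_same)
  next
    case False then show ?thesis
      by (intro rA[OF Suc, where fs = "[Suc s]" and c = a]) (simp_all add: replicate_append_same)
  qed
qed

lemma X0: "rich (enc a b [0, r, s])"
  by (rule rP[OF famX[of r s], where fs = "[0, r, 0]" and c = b]) simp_all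

lemma X1: "rich (enc a b [1, r, s])"
proof (cases "s \<ge> 1")
  case True then show ?thesis by (intro rP[OF X0[of r s], where fs = "[1, r, 1]" and c = a]) simp_all
next
  case False
  show ?thesis
  proof (cases "r = 0")
    case True then show ?thesis using False by (intro rP[OF X0[of r s], where fs = "[1]" and c = a]) simp_all
  next
    case F2: False then show ?thesis using False by (intro rP[OF X0[of r s], where fs = "[1, 1]" and c = a]) simp_all
  qed
qed

lemma F1a: "rich (enc a b [0, 1, r, s])"
proof (cases "r = 1")
  case True then show ?thesis by (intro rP[OF X1[of r s], where fs = "[0, 1, 1, 0]" and c = b]) simp_all
next
  case False then show ?thesis by (intro rP[OF X1[of r s], where fs = "[0, 1, 0]" and c = b]) simp_all
qed

lemma F1: "rich (enc a b [1, 1, r, s])"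
proof -
  consider "r = 0" | "r = 1" "s = 0" | "r = 1" "s \<ge> 1" | "r \<ge> 2" by linarith
  then show ?thesis
  proof cases
    case 1 then show ?thesis by (intro rP[OF F1a[of r s], where fs = "[1, 1]" and c = a]) simp_all
  next
    case 2 then show ?thesis by (intro rP[OF F1a[of r s], where fs = "[1, 1, 1]" and c = a]) simp_all
  next
    case 3 then show ?thesis by (intro rP[OF F1a[of r s], where fs = "[1, 1, 1, 1]" and c = a]) simp_all
  next
    case 4 then show ?thesis by (intro rP[OF F1a[of r s], where fs = "[1, 1, 1]" and c = a]) simp_all
  qed
qed

lemma X2: "rich (enc a b [2, r, s])"
proof -
  consider "s \<ge> 2" | "s \<le> 1" "r \<le> 1" | "s \<le> 1" "r \<ge> 2" by linarith
  then show ?thesis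
  proof cases
    case 1 then show ?thesis by (intro rP[OF X1[of r s], where fs = "[2, r, 2]" and c = a]) (simp_all add: numeral_2_eq_2)
  next
    case 2 then show ?thesis by (intro rP[OF X1[of r s], where fs = "[2]" and c = a]) (simp_all add: numeral_2_eq_2)
  next
    case 3 then show ?thesis by (intro rP[OF X1[of r s], where fs = "[2, 2]" and c = a]) (simp_all add: numeral_2_eq_2)
  qed
qed

lemma F2: "rich (enc a b [0, 2, r, s])"
proof (cases "r = 2")
  case True then show ?thesis by (intro rP[OF X2[of r s], where fs = "[0, 2, 2, 0]" and c = b]) (simp_all add: numeral_2_eq_2)
next
  case False then show ?thesis by (intro rP[OF X2[of r s], where fs = "[0, 2, 0]" and c = b]) (simp_all add: numeral_2_eq_2)
qed

lemma X00: "rich (enc a b [0, 0, r, s])"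
proof (cases "r = 0")
  case True then show ?thesis by (intro rP[OF X0[of r s], where fs = "[0, 0, 0, 0]" and c = b]) simp_all
next
  case False then show ?thesis by (intro rP[OF X0[of r s], where fs = "[0, 0, 0]" and c = b]) simp_all
qed

lemma F3: "rich (enc a b [1, 0, r, s])"
proof -
  consider "r = 0" "s = 0" | "r = 0" "s \<ge> 1" | "r \<ge> 1" by linarith
  then show ?thesis
  proof cases
    case 1 then show ?thesis by (intro rP[OF X00[of r s], where fs = "[1]" and c = a]) simp_all
  next
    case 2 then show ?thesis by (intro rP[OF X00[of r s], where fs = "[1, 0, 0, 1]" and c = a]) simp_all
  next
    case 3 then show ?thesis by (intro rP[OF X00[of r s], where fs = "[1, 0, 1]" and c = a]) simp_all
  qed
qed

lemma Y0: "rich (enc a b [r, 0])"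
  by (rule rA[OF core[of r], where fs = "[0, 0]" and c = b]) simp_all

lemma Y1: "rich (enc a b [r, 1])"
proof (cases "r = 0")
  case True then show ?thesis by (intro rA[OF Y0[of r], where fs = "[1]" and c = a]) simp_all
next
  case False then show ?thesis by (intro rA[OF Y0[of r], where fs = "[1, 1]" and c = a]) simp_all
qed

lemma Y10: "rich (enc a b [r, 1, 0])"
  by (rule rA[OF Y1[of r], where fs = "[0, 1, 0]" and c = b]) simp_all

lemma famY: "rich (enc a b [r, 1, s])"
proof (induction s)
  case 0 show ?case by (rule Y10)
next
  case (Suc s)
  consider "s = 0" "r = 0" | "s = 0" "r \<ge> 1" | "s \<ge> 1" "Suc s \<le> r" | "s \<ge> 1" "\<not> Suc s \<le> r" by linarith
  then show ?case
  proof cases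
    case 1 then show ?thesis
      by (intro rA[OF Suc, where fs = "[1, 1]" and c = a]) (simp_all add: replicate_append_same)
  next
    case 2 then show ?thesis
      by (intro rA[OF Suc, where fs = "[1, 1, 1]" and c = a]) (simp_all add: replicate_append_same)
  next
    case 3 then show ?thesis
      by (intro rA[OF Suc, where fs = "[Suc s, 1, Suc s]" and c = a]) (simp_all add: replicate_append_same)
  next
    case 4 then show ?thesis
      by (intro rA[OF Suc, where fs = "[Suc s]" and c = a]) (simp_all add: replicate_append_same)
  qed
qed

lemma Y0': "rich (enc a b [0, r, 1, s])"
proof -
  consider "r = 0" | "r = 1" | "r \<ge> 2" by linarith
  then show ?thesis
  proof cases
    case 1 then show ?thesis by (intro rP[OF famY[of r s], where fs = "[0, 0, 0]" and c = b]) simp_all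
  next
    case 2 then show ?thesis by (intro rP[OF famY[of r s], where fs = "[0, 1, 1, 0]" and c = b]) simp_all
  next
    case 3 then show ?thesis by (intro rP[OF famY[of r s], where fs = "[0, r, 0]" and c = b]) simp_all
  qed
qed

lemma F4: "rich (enc a b [1, r, 1, s])"
proof -
  consider "r = 0" | "r = 1" "s = 0" | "r = 1" "s \<ge> 1" | "r \<ge> 2" by linarith
  then show ?thesis
  proof cases
    case 1 then show ?thesis by (intro rP[OF Y0'[of r s], where fs = "[1, 0, 1]" and c = a]) simp_all
  next
    case 2 then show ?thesis by (intro rP[OF Y0'[of r s], where fs = "[1, 1, 1]" and c = a]) simp_all
  next
    case 3 then show ?thesis by (intro rP[OF Y0'[of r s], where fs = "[1, 1, 1, 1]" and c = a]) simp_all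
  next
    case 4 then show ?thesis by (intro rP[OF Y0'[of r s], where fs = "[1, r, 1]" and c = a]) simp_all
  qed
qed

lemma Z0: "rich (enc a b [r, 1, 1, 0])"
  by (rule rA[OF famY[of r 1], where fs = "[0, 1, 1, 0]" and c = b]) simp_all

lemma F5: "rich (enc a b [r, 1, 1, s])"
proof (induction s)
  case 0 show ?case by (rule Z0)
next
  case (Suc s)
  consider "s = 0" "r = 0" | "s = 0" "r \<ge> 1" | "s \<ge> 1" "Suc s \<le> r" | "s \<ge> 1" "\<not> Suc s \<le> r" by linarith
  then show ?case
  proof cases
    case 1 then show ?thesis
      by (intro rA[OF Suc, where fs = "[1, 1, 1]" and c = a]) (simp_all add: replicate_append_same)
  next
    case 2 then show ?thesis
      by (intro rA[OF Suc, where fs = "[1, 1, 1, 1]" and c = a]) (simp_all add: replicate_append_same)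
  next
    case 3 then show ?thesis
      by (intro rA[OF Suc, where fs = "[Suc s, 1, 1, Suc s]" and c = a]) (simp_all add: replicate_append_same)
  next
    case 4 then show ?thesis
      by (intro rA[OF Suc, where fs = "[Suc s]" and c = a]) (simp_all add: replicate_append_same)
  qed
qed

end


lemma BR_struct:
  assumes "Bs \<noteq> []" "\<forall>B\<in>set Bs. B \<noteq> []" "concat Bs = replicate n a @ z" "z \<noteq> []"
  shows "\<exists>r x z' y. r \<le> n \<and> z = x @ z' \<and> x \<noteq> [] \<and> ((z' = [] \<and> y = []) \<or> (z' \<noteq> [] \<and> y \<in> BR z')) \<and>
           concat (rev Bs) = y @ replicate r a @ x @ replicate (n - r) a"
  using assms
proof (induction Bs arbitrary: n)
  case Nil then show ?case by simp
next
  case (Cons B R)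
  have eq: "B @ concat R = replicate n a @ z" using Cons.prems by simp
  show ?case
  proof (cases "length B \<le> n")
    case True
    have "B = take (length B) (replicate n a @ z)" using eq by (metis append_eq_conv_conj)
    then have B: "B = replicate (length B) a" using True by simp
    have R: "concat R = replicate (n - length B) a @ z"
      using eq True by (simp add: append_eq_append_conv_if drop_replicate)
    have "R \<noteq> []" using R Cons.prems(4) by auto
    then obtain r x z' y where IH: "r \<le> n - length B" "z = x @ z'" "x \<noteq> []"
      "(z' = [] \<and> y = []) \<or> (z' \<noteq> [] \<and> y \<in> BR z')"
      "concat (rev R) = y @ replicate r a @ x @ replicate (n - length B - r) a"
      using Cons.IH[of "n - length B"] Cons.prems R by auto
    have "concat (rev (B # R)) = y @ replicate r a @ x @ replicate (n - length B - r) a @ B"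
      using IH(5) by simp
    also have "replicate (n - length B - r) a @ B = replicate (n - length B - r + length B) a"
      using B by (metis replicate_add)
    also have "n - length B - r + length B = n - r" using IH(1) True by arith
    finally show ?thesis using IH(1-4) by (intro exI[of _ r] exI[of _ x] exI[of _ z'] exI[of _ y]) auto
  next
    case False
    define x where "x = drop n B"
    have tB: "take n B = replicate n a" and z: "z = x @ concat R"
      using eq False unfolding x_def by (auto simp: append_eq_append_conv_if take_replicate)
    have B: "B = replicate n a @ x" unfolding x_def tB[symmetric] by simp
    have xne: "x \<noteq> []" using False unfolding x_def by simp
    show ?thesis
    proof (cases "R = []")
      case True
      then show ?thesis using B z xne
        by (intro exI[of _ n] exI[of _ x] exI[of _ "[]"] exI[of _ "[]"]) auto
    next
      case RNE: False
      have "concat (rev R) \<in> BR (concat R)" using RNE Cons.prems(2) by (intro BR_intro) auto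
      moreover have "concat R \<noteq> []" using RNE Cons.prems(2) by (cases R) auto
      ultimately show ?thesis using B z xne
        by (intro exI[of _ n] exI[of _ x] exI[of _ "concat R"] exI[of _ "concat (rev R)"]) auto
    qed
  qed
qed

lemma rich_suf: "rich W \<Longrightarrow> W = P @ v \<Longrightarrow> rich v"
  using rich_suffix by blast

lemma good_fam:
  assumes ab: "a \<noteq> b"
  shows "\<forall>v\<in>BR (replicate n a @ [b, a, b, a, b]). rich v"
proof
  fix v assume "v \<in> BR (replicate n a @ [b, a, b, a, b])"
  then obtain Bs where Bs: "v = concat (rev Bs)" "Bs \<noteq> []" "\<forall>B\<in>set Bs. B \<noteq> []"
    "concat Bs = replicate n a @ [b, a, b, a, b]" unfolding BR_def by blast
  obtain r x z' y where S: "r \<le> n" "[b, a, b, a, b] = x @ z'" "x \<noteq> []"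
      "(z' = [] \<and> y = []) \<or> (z' \<noteq> [] \<and> y \<in> BR z')"
      "v = y @ replicate r a @ x @ replicate (n - r) a"
    using BR_struct[OF Bs(2,3,4)] Bs(1) by blast
  define s where "s = n - r"
  have v: "v = y @ replicate r a @ x @ replicate s a" using S(5) s_def by simp
  have x: "x = take (length x) [b, a, b, a, b]" "z' = drop (length x) [b, a, b, a, b]"
    using S(2) by (metis append_eq_conv_conj)+
  have "length [b, a, b, a, b] = length (x @ z')" using S(2) by simp
  then have lx: "length x \<ge> 1" "length x \<le> 5" using S(3) by (auto simp: Suc_le_eq)
  consider "length x = 1" | "length x = 2" | "length x = 3" | "length x = 4" | "length x = 5"
    using lx by linarith
  then show "rich v"
  proof cases
    case 1
    then have xz: "x = [b]" "z' = [a, b, a, b]" using x by (simp_all add: numeral_eq_Suc)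
    then have "y \<in> BR [a, b, a, b]" using S(4) by simp
    then have "y = [a,b,a,b] \<or> y = [b,a,b,a] \<or> y = [a,b,b,a] \<or> y = [b,b,a,a] \<or> y = [b,a,a,b]"
      by (auto simp: BR_bp)
    then show ?thesis
    proof (elim disjE)
      assume "y = [a,b,a,b]" then show ?thesis using v xz
        by (intro rich_suf[OF F1[OF ab, of r s], where P = "[]"]) simp
    next
      assume "y = [b,a,b,a]" then show ?thesis using v xz
        by (intro rich_suf[OF F1[OF ab, of "Suc r" s], where P = "[a]"]) simp
    next
      assume "y = [a,b,b,a]" then show ?thesis using v xz
        by (intro rich_suf[OF F3[OF ab, of "Suc r" s], where P = "[]"]) simp
    next
      assume "y = [b,b,a,a]" then show ?thesis using v xz
        by (intro rich_suf[OF F3[OF ab, of "Suc (Suc r)" s], where P = "[a]"]) simp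
    next
      assume "y = [b,a,a,b]" then show ?thesis using v xz
        by (intro rich_suf[OF F2[OF ab, of r s], where P = "[]"]) (simp add: numeral_2_eq_2)
    qed
  next
    case 2
    then have xz: "x = [b, a]" "z' = [b, a, b]" using x by (simp_all add: numeral_eq_Suc)
    then have "y \<in> BR [b, a, b]" using S(4) by simp
    then have "y = [b,a,b] \<or> y = [a,b,b] \<or> y = [b,b,a]"
      by (auto simp: BR_bp)
    then show ?thesis
    proof (elim disjE)
      assume "y = [b,a,b]" then show ?thesis using v xz
        by (intro rich_suf[OF F1[OF ab, of r "Suc s"], where P = "[a]"]) simp
    next
      assume "y = [a,b,b]" then show ?thesis using v xz
        by (intro rich_suf[OF F3[OF ab, of r "Suc s"], where P = "[]"]) simp
    next
      assume "y = [b,b,a]" then show ?thesis using v xz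
        by (intro rich_suf[OF F3[OF ab, of "Suc r" "Suc s"], where P = "[a]"]) simp
    qed
  next
    case 3
    then have xz: "x = [b, a, b]" "z' = [a, b]" using x by (simp_all add: numeral_eq_Suc)
    then have "y \<in> BR [a, b]" using S(4) by simp
    then have "y = [a,b] \<or> y = [b,a]"
      by (auto simp: BR_bp)
    then show ?thesis
    proof (elim disjE)
      assume "y = [a,b]" then show ?thesis using v xz
        by (intro rich_suf[OF F4[OF ab, of r s], where P = "[]"]) simp
    next
      assume "y = [b,a]" then show ?thesis using v xz
        by (intro rich_suf[OF F4[OF ab, of "Suc r" s], where P = "[a]"]) simp
    qed
  next
    case 4
    then have xz: "x = [b, a, b, a]" "z' = [b]" using x by (simp_all add: numeral_eq_Suc)
    then have "y \<in> BR [b]" using S(4) by simp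
    then have "y = [b]" by (auto simp: BR_bp)
    then show ?thesis using v xz
      by (intro rich_suf[OF F4[OF ab, of r "Suc s"], where P = "[a]"]) simp
  next
    case 5
    then have xz: "x = [b, a, b, a, b]" "z' = []" using x by (simp_all add: numeral_eq_Suc)
    then have "y = []" using S(4) by simp
    then show ?thesis using v xz
      by (intro rich_suf[OF F5[OF ab, of r s], where P = "[]"]) simp
  qed
qed


definition rw6 :: "'a \<Rightarrow> 'a \<Rightarrow> nat \<Rightarrow> nat \<Rightarrow> nat \<Rightarrow> nat \<Rightarrow> nat \<Rightarrow> nat \<Rightarrow> 'a list" where
  "rw6 c d n1 n2 n3 n4 n5 n6 = replicate n1 c @ replicate n2 d @ replicate n3 c @ replicate n4 d @
     replicate n5 c @ replicate n6 d"

definition Sgood :: "nat \<Rightarrow> nat \<Rightarrow> nat \<Rightarrow> nat \<Rightarrow> nat \<Rightarrow> nat \<Rightarrow> bool" where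
  "Sgood n1 n2 n3 n4 n5 n6 \<longleftrightarrow>
     (n1 = 1 \<and> n2 = 2 \<and> n3 = 1 \<and> n4 = 1 \<and> n5 = 2 \<and> n6 = 1) \<or>
     (n1 = 1 \<and> n2 = 1 \<and> n3 = 1 \<and> n4 = 2 \<and> n5 = 2 \<and> n6 = 1) \<or>
     (n1 = 1 \<and> n2 = 2 \<and> n3 = 2 \<and> n4 = 1 \<and> n5 = 1 \<and> n6 = 1) \<or>
     (n1 = 1 \<and> n2 = 1 \<and> n3 = 1 \<and> n4 = 1 \<and> n5 = 2 \<and> n6 = 2) \<or>
     (n1 = 2 \<and> n2 = 2 \<and> n3 = 1 \<and> n4 = 1 \<and> n5 = 1 \<and> n6 = 1) \<or>
     (n1 = 2 \<and> n2 = 1 \<and> n3 = 1 \<and> n4 = 2 \<and> n5 = 1 \<and> n6 = 1) \<or>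
     (n1 = 1 \<and> n2 = 1 \<and> n3 = 2 \<and> n4 = 1 \<and> n5 = 1 \<and> n6 = 2) \<or>
     (n1 = 2 \<and> n2 = 1 \<and> n3 = 1 \<and> n4 = 1 \<and> n5 = 1 \<and> n6 = 2) \<or>
     (n1 = 1 \<and> n2 = 1 \<and> n3 = 2 \<and> n4 = 2 \<and> n5 = 1 \<and> n6 = 1) \<or>
     (n1 \<ge> 3 \<and> n2 = 1 \<and> n3 = 1 \<and> n4 = 1 \<and> n5 = 1 \<and> n6 = 1) \<or>
     (n1 = 1 \<and> n2 = 1 \<and> n3 = 1 \<and> n4 = 1 \<and> n5 = 1 \<and> n6 \<ge> 3)"

lemma inj_ab: "a \<noteq> b \<Longrightarrow> inj_on (\<lambda>x::bool. if x then a else b) S"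
  by (auto simp: inj_on_def split: if_splits)

lemma nr0: assumes "a \<noteq> b" shows "\<not> rich [a, a, b, a, b, b, a, a]"
proof
  have e: "[a, a, b, a, b, b, a, a] = map (\<lambda>x. if x then a else b) [True, True, False, True, False, False, True, True]" by simp
  have n: "\<not> richc [True, True, False, True, False, False, True, True]" by code_simp
  assume "rich [a, a, b, a, b, b, a, a]"
  then have "rich (map (\<lambda>x. if x then a else b) [True, True, False, True, False, False, True, True])" by (simp only: e)
  then have "rich [True, True, False, True, False, False, True, True]" by (simp only: rich_map[OF inj_ab[OF assms]])
  then show False using n by (simp add: rich_richc)
qed

lemma nr1: assumes "a \<noteq> b" shows "\<not> rich [a, a, b, b, a, b, a, a]"
proof
  have e: "[a, a, b, b, a, b, a, a] = map (\<lambda>x. if x then a else b) [True, True, False, False, True, False, True, True]" by simp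
  have n: "\<not> richc [True, True, False, False, True, False, True, True]" by code_simp
  assume "rich [a, a, b, b, a, b, a, a]"
  then have "rich (map (\<lambda>x. if x then a else b) [True, True, False, False, True, False, True, True])" by (simp only: e)
  then have "rich [True, True, False, False, True, False, True, True]" by (simp only: rich_map[OF inj_ab[OF assms]])
  then show False using n by (simp add: rich_richc)
qed

lemma nr2: assumes "a \<noteq> b" shows "\<not> rich [a, b, a, b, b, a, a, b, a]"
proof
  have e: "[a, b, a, b, b, a, a, b, a] = map (\<lambda>x. if x then a else b) [True, False, True, False, False, True, True, False, True]" by simp
  have n: "\<not> richc [True, False, True, False, False, True, True, False, True]" by code_simp
  assume "rich [a, b, a, b, b, a, a, b, a]"
  then have "rich (map (\<lambda>x. if x then a else b) [True, False, True, False, False, True, True, False, True])" by (simp only: e)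
  then have "rich [True, False, True, False, False, True, True, False, True]" by (simp only: rich_map[OF inj_ab[OF assms]])
  then show False using n by (simp add: rich_richc)
qed

lemma nr3: assumes "a \<noteq> b" shows "\<not> rich [b, a, b, b, a, a, b, a, b]"
proof
  have e: "[b, a, b, b, a, a, b, a, b] = map (\<lambda>x. if x then a else b) [False, True, False, False, True, True, False, True, False]" by simp
  have n: "\<not> richc [False, True, False, False, True, True, False, True, False]" by code_simp
  assume "rich [b, a, b, b, a, a, b, a, b]"
  then have "rich (map (\<lambda>x. if x then a else b) [False, True, False, False, True, True, False, True, False])" by (simp only: e)
  then have "rich [False, True, False, False, True, True, False, True, False]" by (simp only: rich_map[OF inj_ab[OF assms]])
  then show False using n by (simp add: rich_richc)
qed

lemma nr4: assumes "a \<noteq> b" shows "\<not> rich [b, b, a, a, b, a, b, b]"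
proof
  have e: "[b, b, a, a, b, a, b, b] = map (\<lambda>x. if x then a else b) [False, False, True, True, False, True, False, False]" by simp
  have n: "\<not> richc [False, False, True, True, False, True, False, False]" by code_simp
  assume "rich [b, b, a, a, b, a, b, b]"
  then have "rich (map (\<lambda>x. if x then a else b) [False, False, True, True, False, True, False, False])" by (simp only: e)
  then have "rich [False, False, True, True, False, True, False, False]" by (simp only: rich_map[OF inj_ab[OF assms]])
  then show False using n by (simp add: rich_richc)
qed

lemma nr5: assumes "a \<noteq> b" shows "\<not> rich [b, b, a, b, a, a, b, b]"
proof
  have e: "[b, b, a, b, a, a, b, b] = map (\<lambda>x. if x then a else b) [False, False, True, False, True, True, False, False]" by simp
  have n: "\<not> richc [False, False, True, False, True, True, False, False]" by code_simp
  assume "rich [b, b, a, b, a, a, b, b]"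
  then have "rich (map (\<lambda>x. if x then a else b) [False, False, True, False, True, True, False, False])" by (simp only: e)
  then have "rich [False, False, True, False, True, True, False, False]" by (simp only: rich_map[OF inj_ab[OF assms]])
  then show False using n by (simp add: rich_richc)
qed

lemma rule0:
  assumes "a \<noteq> b" "n1 \<ge> 1" "n2 = 1" "n3 = 1" "n4 \<ge> 2" "n5 \<ge> 1" "n6 \<ge> 2"
  shows "\<exists>v\<in>BR (rw6 a b n1 n2 n3 n4 n5 n6). \<not> rich v"
proof -
  obtain k1 where o1: "n1 = 1 + k1" using assms(2) le_Suc_ex by blast
  obtain k4 where o4: "n4 = 2 + k4" using assms(5) le_Suc_ex by blast
  obtain k5 where o5: "n5 = 1 + k5" using assms(6) le_Suc_ex by blast
  obtain k6 where o6: "n6 = 2 + k6" using assms(7) le_Suc_ex by blast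
  have "rw6 a b n1 n2 n3 n4 n5 n6 = (replicate k1 a) @ ([a] @ [b] @ [a] @ [b, b]) @ (replicate k4 b @ replicate k5 a) @ ([a]) @ (replicate k6 b) @ ([b, b]) @ []"
    using assms o1 o4 o5 o6 by (simp add: rw6_def replicate_add numeral_eq_Suc replicate_app_Cons_same replicate_append_same)
  then show ?thesis by (rule witness) (simp_all add: nr4[OF assms(1)])
qed

lemma rule1:
  assumes "a \<noteq> b" "n1 \<ge> 1" "n2 = 1" "n3 = 1" "n4 \<ge> 3" "n5 \<ge> 1" "n6 \<ge> 1"
  shows "\<exists>v\<in>BR (rw6 a b n1 n2 n3 n4 n5 n6). \<not> rich v"
proof -
  obtain k1 where o1: "n1 = 1 + k1" using assms(2) le_Suc_ex by blast
  obtain k4 where o4: "n4 = 3 + k4" using assms(5) le_Suc_ex by blast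
  obtain k5 where o5: "n5 = 1 + k5" using assms(6) le_Suc_ex by blast
  obtain k6 where o6: "n6 = 1 + k6" using assms(7) le_Suc_ex by blast
  have "rw6 a b n1 n2 n3 n4 n5 n6 = (replicate k1 a) @ ([a] @ [b] @ [a] @ [b, b]) @ (replicate k4 b) @ ([b] @ [a]) @ (replicate k5 a @ replicate k6 b) @ ([b]) @ []"
    using assms o1 o4 o5 o6 by (simp add: rw6_def replicate_add numeral_eq_Suc replicate_app_Cons_same replicate_append_same)
  then show ?thesis by (rule witness) (simp_all add: nr4[OF assms(1)])
qed

lemma rule2:
  assumes "a \<noteq> b" "n1 \<ge> 1" "n2 = 1" "n3 = 2" "n4 \<ge> 2" "n5 \<ge> 1" "n6 \<ge> 2"
  shows "\<exists>v\<in>BR (rw6 a b n1 n2 n3 n4 n5 n6). \<not> rich v"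
proof -
  obtain k1 where o1: "n1 = 1 + k1" using assms(2) le_Suc_ex by blast
  obtain k4 where o4: "n4 = 2 + k4" using assms(5) le_Suc_ex by blast
  obtain k5 where o5: "n5 = 1 + k5" using assms(6) le_Suc_ex by blast
  obtain k6 where o6: "n6 = 2 + k6" using assms(7) le_Suc_ex by blast
  have "rw6 a b n1 n2 n3 n4 n5 n6 = (replicate k1 a) @ ([a] @ [b] @ [a, a] @ [b, b]) @ (replicate k4 b @ [a] @ replicate k5 a @ replicate k6 b) @ ([b]) @ [] @ ([b]) @ []"
    using assms o1 o4 o5 o6 by (simp add: rw6_def replicate_add numeral_eq_Suc replicate_app_Cons_same replicate_append_same)
  then show ?thesis by (rule witness) (simp_all add: nr5[OF assms(1)])
qed

lemma rule3:
  assumes "a \<noteq> b" "n1 \<ge> 1" "n2 = 1" "n3 = 2" "n4 \<ge> 3" "n5 \<ge> 1" "n6 \<ge> 1"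
  shows "\<exists>v\<in>BR (rw6 a b n1 n2 n3 n4 n5 n6). \<not> rich v"
proof -
  obtain k1 where o1: "n1 = 1 + k1" using assms(2) le_Suc_ex by blast
  obtain k4 where o4: "n4 = 3 + k4" using assms(5) le_Suc_ex by blast
  obtain k5 where o5: "n5 = 1 + k5" using assms(6) le_Suc_ex by blast
  obtain k6 where o6: "n6 = 1 + k6" using assms(7) le_Suc_ex by blast
  have "rw6 a b n1 n2 n3 n4 n5 n6 = (replicate k1 a) @ ([a] @ [b] @ [a, a] @ [b, b]) @ (replicate k4 b) @ ([b]) @ ([a] @ replicate k5 a @ replicate k6 b) @ ([b]) @ []"
    using assms o1 o4 o5 o6 by (simp add: rw6_def replicate_add numeral_eq_Suc replicate_app_Cons_same replicate_append_same)
  then show ?thesis by (rule witness) (simp_all add: nr5[OF assms(1)])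
qed

lemma rule4:
  assumes "a \<noteq> b" "n1 \<ge> 1" "n2 = 1" "n3 \<ge> 2" "n4 \<ge> 1" "n5 \<ge> 2" "n6 \<ge> 1"
  shows "\<exists>v\<in>BR (rw6 a b n1 n2 n3 n4 n5 n6). \<not> rich v"
proof -
  obtain k1 where o1: "n1 = 1 + k1" using assms(2) le_Suc_ex by blast
  obtain k3 where o3: "n3 = 2 + k3" using assms(4) le_Suc_ex by blast
  obtain k4 where o4: "n4 = 1 + k4" using assms(5) le_Suc_ex by blast
  obtain k5 where o5: "n5 = 2 + k5" using assms(6) le_Suc_ex by blast
  obtain k6 where o6: "n6 = 1 + k6" using assms(7) le_Suc_ex by blast
  have "rw6 a b n1 n2 n3 n4 n5 n6 = (replicate k1 a) @ ([a] @ [b] @ [a, a]) @ (replicate k3 a @ replicate k4 b) @ ([b]) @ (replicate k5 a) @ ([a, a] @ [b]) @ (replicate k6 b)"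
    using assms o1 o3 o4 o5 o6 by (simp add: rw6_def replicate_add numeral_eq_Suc replicate_app_Cons_same replicate_append_same)
  then show ?thesis by (rule witness) (simp_all add: nr1[OF assms(1)])
qed

lemma rule5:
  assumes "a \<noteq> b" "n1 \<ge> 1" "n2 = 1" "n3 \<ge> 3" "n4 \<ge> 2" "n5 \<ge> 1" "n6 \<ge> 1"
  shows "\<exists>v\<in>BR (rw6 a b n1 n2 n3 n4 n5 n6). \<not> rich v"
proof -
  obtain k1 where o1: "n1 = 1 + k1" using assms(2) le_Suc_ex by blast
  obtain k3 where o3: "n3 = 3 + k3" using assms(4) le_Suc_ex by blast
  obtain k4 where o4: "n4 = 2 + k4" using assms(5) le_Suc_ex by blast
  obtain k5 where o5: "n5 = 1 + k5" using assms(6) le_Suc_ex by blast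
  obtain k6 where o6: "n6 = 1 + k6" using assms(7) le_Suc_ex by blast
  have "rw6 a b n1 n2 n3 n4 n5 n6 = (replicate k1 a) @ ([a] @ [b] @ [a, a]) @ (replicate k3 a) @ ([a] @ [b, b]) @ (replicate k4 b @ replicate k5 a) @ ([a]) @ ([b] @ replicate k6 b)"
    using assms o1 o3 o4 o5 o6 by (simp add: rw6_def replicate_add numeral_eq_Suc replicate_app_Cons_same replicate_append_same)
  then show ?thesis by (rule witness) (simp_all add: nr1[OF assms(1)])
qed

lemma rule6:
  assumes "a \<noteq> b" "n1 \<ge> 1" "n2 = 2" "n3 \<ge> 2" "n4 \<ge> 1" "n5 \<ge> 2" "n6 \<ge> 1"
  shows "\<exists>v\<in>BR (rw6 a b n1 n2 n3 n4 n5 n6). \<not> rich v"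
proof -
  obtain k1 where o1: "n1 = 1 + k1" using assms(2) le_Suc_ex by blast
  obtain k3 where o3: "n3 = 2 + k3" using assms(4) le_Suc_ex by blast
  obtain k4 where o4: "n4 = 1 + k4" using assms(5) le_Suc_ex by blast
  obtain k5 where o5: "n5 = 2 + k5" using assms(6) le_Suc_ex by blast
  obtain k6 where o6: "n6 = 1 + k6" using assms(7) le_Suc_ex by blast
  have "rw6 a b n1 n2 n3 n4 n5 n6 = (replicate k1 a) @ ([a] @ [b, b] @ [a, a]) @ (replicate k3 a @ replicate k4 b) @ ([b]) @ (replicate k5 a) @ ([a, a]) @ ([b] @ replicate k6 b)"
    using assms o1 o3 o4 o5 o6 by (simp add: rw6_def replicate_add numeral_eq_Suc replicate_app_Cons_same replicate_append_same)
  then show ?thesis by (rule witness) (simp_all add: nr0[OF assms(1)])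
qed

lemma rule7:
  assumes "a \<noteq> b" "n1 \<ge> 1" "n2 \<ge> 1" "n3 = 1" "n4 = 1" "n5 = 2" "n6 \<ge> 3"
  shows "\<exists>v\<in>BR (rw6 a b n1 n2 n3 n4 n5 n6). \<not> rich v"
proof -
  obtain k1 where o1: "n1 = 1 + k1" using assms(2) le_Suc_ex by blast
  obtain k2 where o2: "n2 = 1 + k2" using assms(3) le_Suc_ex by blast
  obtain k6 where o6: "n6 = 3 + k6" using assms(7) le_Suc_ex by blast
  have "rw6 a b n1 n2 n3 n4 n5 n6 = ([a] @ replicate k1 a @ replicate k2 b) @ ([b] @ [a] @ [b] @ [a, a] @ [b, b]) @ (replicate k6 b) @ [] @ [] @ ([b]) @ []"
    using assms o1 o2 o6 by (simp add: rw6_def replicate_add numeral_eq_Suc replicate_app_Cons_same replicate_append_same)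
  then show ?thesis by (rule witness) (simp_all add: nr5[OF assms(1)])
qed

lemma rule8:
  assumes "a \<noteq> b" "n1 \<ge> 1" "n2 \<ge> 1" "n3 = 1" "n4 = 1" "n5 \<ge> 3" "n6 \<ge> 1"
  shows "\<exists>v\<in>BR (rw6 a b n1 n2 n3 n4 n5 n6). \<not> rich v"
proof -
  obtain k1 where o1: "n1 = 1 + k1" using assms(2) le_Suc_ex by blast
  obtain k2 where o2: "n2 = 1 + k2" using assms(3) le_Suc_ex by blast
  obtain k5 where o5: "n5 = 3 + k5" using assms(6) le_Suc_ex by blast
  obtain k6 where o6: "n6 = 1 + k6" using assms(7) le_Suc_ex by blast
  have "rw6 a b n1 n2 n3 n4 n5 n6 = (replicate k1 a) @ ([a]) @ (replicate k2 b) @ ([b] @ [a] @ [b] @ [a]) @ (replicate k5 a) @ ([a, a] @ [b]) @ (replicate k6 b)"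
    using assms o1 o2 o5 o6 by (simp add: rw6_def replicate_add numeral_eq_Suc replicate_app_Cons_same replicate_append_same)
  then show ?thesis by (rule witness) (simp_all add: nr1[OF assms(1)])
qed

lemma rule9:
  assumes "a \<noteq> b" "n1 \<ge> 1" "n2 \<ge> 1" "n3 = 1" "n4 = 2" "n5 \<ge> 3" "n6 \<ge> 1"
  shows "\<exists>v\<in>BR (rw6 a b n1 n2 n3 n4 n5 n6). \<not> rich v"
proof -
  obtain k1 where o1: "n1 = 1 + k1" using assms(2) le_Suc_ex by blast
  obtain k2 where o2: "n2 = 1 + k2" using assms(3) le_Suc_ex by blast
  obtain k5 where o5: "n5 = 3 + k5" using assms(6) le_Suc_ex by blast
  obtain k6 where o6: "n6 = 1 + k6" using assms(7) le_Suc_ex by blast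
  have "rw6 a b n1 n2 n3 n4 n5 n6 = (replicate k1 a) @ ([a]) @ (replicate k2 b) @ ([b] @ [a] @ [b, b] @ [a]) @ (replicate k5 a) @ ([a, a]) @ ([b] @ replicate k6 b)"
    using assms o1 o2 o5 o6 by (simp add: rw6_def replicate_add numeral_eq_Suc replicate_app_Cons_same replicate_append_same)
  then show ?thesis by (rule witness) (simp_all add: nr0[OF assms(1)])
qed

lemma rule10:
  assumes "a \<noteq> b" "n1 \<ge> 1" "n2 \<ge> 1" "n3 = 2" "n4 = 1" "n5 = 1" "n6 \<ge> 3"
  shows "\<exists>v\<in>BR (rw6 a b n1 n2 n3 n4 n5 n6). \<not> rich v"
proof -
  obtain k1 where o1: "n1 = 1 + k1" using assms(2) le_Suc_ex by blast
  obtain k2 where o2: "n2 = 1 + k2" using assms(3) le_Suc_ex by blast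
  obtain k6 where o6: "n6 = 3 + k6" using assms(7) le_Suc_ex by blast
  have "rw6 a b n1 n2 n3 n4 n5 n6 = ([a] @ replicate k1 a @ replicate k2 b) @ ([b] @ [a, a] @ [b] @ [a] @ [b, b]) @ (replicate k6 b) @ [] @ [] @ ([b]) @ []"
    using assms o1 o2 o6 by (simp add: rw6_def replicate_add numeral_eq_Suc replicate_app_Cons_same replicate_append_same)
  then show ?thesis by (rule witness) (simp_all add: nr4[OF assms(1)])
qed

lemma rule11:
  assumes "a \<noteq> b" "n1 \<ge> 1" "n2 \<ge> 1" "n3 \<ge> 3" "n4 = 1" "n5 = 1" "n6 \<ge> 1"
  shows "\<exists>v\<in>BR (rw6 a b n1 n2 n3 n4 n5 n6). \<not> rich v"
proof -
  obtain k1 where o1: "n1 = 1 + k1" using assms(2) le_Suc_ex by blast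
  obtain k2 where o2: "n2 = 1 + k2" using assms(3) le_Suc_ex by blast
  obtain k3 where o3: "n3 = 3 + k3" using assms(4) le_Suc_ex by blast
  obtain k6 where o6: "n6 = 1 + k6" using assms(7) le_Suc_ex by blast
  have "rw6 a b n1 n2 n3 n4 n5 n6 = (replicate k1 a) @ ([a]) @ (replicate k2 b) @ ([b] @ [a]) @ (replicate k3 a) @ ([a, a] @ [b] @ [a] @ [b]) @ (replicate k6 b)"
    using assms o1 o2 o3 o6 by (simp add: rw6_def replicate_add numeral_eq_Suc replicate_app_Cons_same replicate_append_same)
  then show ?thesis by (rule witness) (simp_all add: nr0[OF assms(1)])
qed

lemma rule12:
  assumes "a \<noteq> b" "n1 \<ge> 1" "n2 \<ge> 1" "n3 \<ge> 3" "n4 \<ge> 1" "n5 \<ge> 2" "n6 \<ge> 1"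
  shows "\<exists>v\<in>BR (rw6 a b n1 n2 n3 n4 n5 n6). \<not> rich v"
proof -
  obtain k1 where o1: "n1 = 1 + k1" using assms(2) le_Suc_ex by blast
  obtain k2 where o2: "n2 = 1 + k2" using assms(3) le_Suc_ex by blast
  obtain k3 where o3: "n3 = 3 + k3" using assms(4) le_Suc_ex by blast
  obtain k4 where o4: "n4 = 1 + k4" using assms(5) le_Suc_ex by blast
  obtain k5 where o5: "n5 = 2 + k5" using assms(6) le_Suc_ex by blast
  obtain k6 where o6: "n6 = 1 + k6" using assms(7) le_Suc_ex by blast
  have "rw6 a b n1 n2 n3 n4 n5 n6 = ([a] @ replicate k1 a @ replicate k2 b) @ ([b] @ [a, a]) @ (replicate k3 a) @ ([a] @ [b]) @ (replicate k4 b @ replicate k5 a) @ ([a, a] @ [b]) @ (replicate k6 b)"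
    using assms o1 o2 o3 o4 o5 o6 by (simp add: rw6_def replicate_add numeral_eq_Suc replicate_app_Cons_same replicate_append_same)
  then show ?thesis by (rule witness) (simp_all add: nr0[OF assms(1)])
qed

lemma rule13:
  assumes "a \<noteq> b" "n1 \<ge> 1" "n2 \<ge> 2" "n3 \<ge> 1" "n4 = 1" "n5 \<ge> 1" "n6 \<ge> 2"
  shows "\<exists>v\<in>BR (rw6 a b n1 n2 n3 n4 n5 n6). \<not> rich v"
proof -
  obtain k1 where o1: "n1 = 1 + k1" using assms(2) le_Suc_ex by blast
  obtain k2 where o2: "n2 = 2 + k2" using assms(3) le_Suc_ex by blast
  obtain k3 where o3: "n3 = 1 + k3" using assms(4) le_Suc_ex by blast
  obtain k5 where o5: "n5 = 1 + k5" using assms(6) le_Suc_ex by blast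
  obtain k6 where o6: "n6 = 2 + k6" using assms(7) le_Suc_ex by blast
  have "rw6 a b n1 n2 n3 n4 n5 n6 = (replicate k1 a) @ ([a] @ [b, b]) @ (replicate k2 b @ replicate k3 a) @ ([a] @ [b] @ [a]) @ (replicate k5 a @ replicate k6 b) @ ([b, b]) @ []"
    using assms o1 o2 o3 o5 o6 by (simp add: rw6_def replicate_add numeral_eq_Suc replicate_app_Cons_same replicate_append_same)
  then show ?thesis by (rule witness) (simp_all add: nr5[OF assms(1)])
qed

lemma rule14:
  assumes "a \<noteq> b" "n1 \<ge> 1" "n2 \<ge> 2" "n3 \<ge> 1" "n4 \<ge> 2" "n5 = 1" "n6 \<ge> 1"
  shows "\<exists>v\<in>BR (rw6 a b n1 n2 n3 n4 n5 n6). \<not> rich v"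
proof -
  obtain k1 where o1: "n1 = 1 + k1" using assms(2) le_Suc_ex by blast
  obtain k2 where o2: "n2 = 2 + k2" using assms(3) le_Suc_ex by blast
  obtain k3 where o3: "n3 = 1 + k3" using assms(4) le_Suc_ex by blast
  obtain k4 where o4: "n4 = 2 + k4" using assms(5) le_Suc_ex by blast
  obtain k6 where o6: "n6 = 1 + k6" using assms(7) le_Suc_ex by blast
  have "rw6 a b n1 n2 n3 n4 n5 n6 = (replicate k1 a) @ ([a] @ [b, b]) @ (replicate k2 b @ replicate k3 a) @ ([a]) @ (replicate k4 b) @ ([b, b] @ [a] @ [b]) @ (replicate k6 b)"
    using assms o1 o2 o3 o4 o6 by (simp add: rw6_def replicate_add numeral_eq_Suc replicate_app_Cons_same replicate_append_same)
  then show ?thesis by (rule witness) (simp_all add: nr5[OF assms(1)])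
qed

lemma rule15:
  assumes "a \<noteq> b" "n1 \<ge> 1" "n2 \<ge> 2" "n3 \<ge> 1" "n4 \<ge> 2" "n5 = 2" "n6 \<ge> 1"
  shows "\<exists>v\<in>BR (rw6 a b n1 n2 n3 n4 n5 n6). \<not> rich v"
proof -
  obtain k1 where o1: "n1 = 1 + k1" using assms(2) le_Suc_ex by blast
  obtain k2 where o2: "n2 = 2 + k2" using assms(3) le_Suc_ex by blast
  obtain k3 where o3: "n3 = 1 + k3" using assms(4) le_Suc_ex by blast
  obtain k4 where o4: "n4 = 2 + k4" using assms(5) le_Suc_ex by blast
  obtain k6 where o6: "n6 = 1 + k6" using assms(7) le_Suc_ex by blast
  have "rw6 a b n1 n2 n3 n4 n5 n6 = (replicate k1 a) @ ([a] @ [b, b]) @ (replicate k2 b @ [a] @ replicate k3 a @ replicate k4 b) @ [] @ [] @ ([b, b] @ [a, a] @ [b]) @ (replicate k6 b)"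
    using assms o1 o2 o3 o4 o6 by (simp add: rw6_def replicate_add numeral_eq_Suc replicate_app_Cons_same replicate_append_same)
  then show ?thesis by (rule witness) (simp_all add: nr4[OF assms(1)])
qed

lemma rule16:
  assumes "a \<noteq> b" "n1 \<ge> 1" "n2 \<ge> 2" "n3 \<ge> 1" "n4 \<ge> 3" "n5 \<ge> 1" "n6 \<ge> 1"
  shows "\<exists>v\<in>BR (rw6 a b n1 n2 n3 n4 n5 n6). \<not> rich v"
proof -
  obtain k1 where o1: "n1 = 1 + k1" using assms(2) le_Suc_ex by blast
  obtain k2 where o2: "n2 = 2 + k2" using assms(3) le_Suc_ex by blast
  obtain k3 where o3: "n3 = 1 + k3" using assms(4) le_Suc_ex by blast
  obtain k4 where o4: "n4 = 3 + k4" using assms(5) le_Suc_ex by blast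
  obtain k5 where o5: "n5 = 1 + k5" using assms(6) le_Suc_ex by blast
  obtain k6 where o6: "n6 = 1 + k6" using assms(7) le_Suc_ex by blast
  have "rw6 a b n1 n2 n3 n4 n5 n6 = (replicate k1 a) @ ([a] @ [b, b]) @ (replicate k2 b @ replicate k3 a) @ ([a] @ [b]) @ (replicate k4 b) @ ([b, b] @ [a]) @ (replicate k5 a @ [b] @ replicate k6 b)"
    using assms o1 o2 o3 o4 o5 o6 by (simp add: rw6_def replicate_add numeral_eq_Suc replicate_app_Cons_same replicate_append_same)
  then show ?thesis by (rule witness) (simp_all add: nr4[OF assms(1)])
qed

lemma rule17:
  assumes "a \<noteq> b" "n1 \<ge> 1" "n2 \<ge> 2" "n3 \<ge> 2" "n4 \<ge> 1" "n5 \<ge> 1" "n6 \<ge> 2"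
  shows "\<exists>v\<in>BR (rw6 a b n1 n2 n3 n4 n5 n6). \<not> rich v"
proof -
  obtain k1 where o1: "n1 = 1 + k1" using assms(2) le_Suc_ex by blast
  obtain k2 where o2: "n2 = 2 + k2" using assms(3) le_Suc_ex by blast
  obtain k3 where o3: "n3 = 2 + k3" using assms(4) le_Suc_ex by blast
  obtain k4 where o4: "n4 = 1 + k4" using assms(5) le_Suc_ex by blast
  obtain k5 where o5: "n5 = 1 + k5" using assms(6) le_Suc_ex by blast
  obtain k6 where o6: "n6 = 2 + k6" using assms(7) le_Suc_ex by blast
  have "rw6 a b n1 n2 n3 n4 n5 n6 = (replicate k1 a) @ ([a] @ [b, b]) @ (replicate k2 b @ replicate k3 a) @ ([a, a] @ [b]) @ (replicate k4 b @ [a] @ replicate k5 a @ replicate k6 b) @ ([b, b]) @ []"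
    using assms o1 o2 o3 o4 o5 o6 by (simp add: rw6_def replicate_add numeral_eq_Suc replicate_app_Cons_same replicate_append_same)
  then show ?thesis by (rule witness) (simp_all add: nr4[OF assms(1)])
qed

lemma rule18:
  assumes "a \<noteq> b" "n1 \<ge> 1" "n2 \<ge> 3" "n3 = 1" "n4 = 1" "n5 \<ge> 1" "n6 \<ge> 1"
  shows "\<exists>v\<in>BR (rw6 a b n1 n2 n3 n4 n5 n6). \<not> rich v"
proof -
  obtain k1 where o1: "n1 = 1 + k1" using assms(2) le_Suc_ex by blast
  obtain k2 where o2: "n2 = 3 + k2" using assms(3) le_Suc_ex by blast
  obtain k5 where o5: "n5 = 1 + k5" using assms(6) le_Suc_ex by blast
  obtain k6 where o6: "n6 = 1 + k6" using assms(7) le_Suc_ex by blast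
  have "rw6 a b n1 n2 n3 n4 n5 n6 = (replicate k1 a) @ ([a] @ [b, b]) @ (replicate k2 b) @ ([b] @ [a] @ [b] @ [a]) @ (replicate k5 a @ replicate k6 b) @ ([b]) @ []"
    using assms o1 o2 o5 o6 by (simp add: rw6_def replicate_add numeral_eq_Suc replicate_app_Cons_same replicate_append_same)
  then show ?thesis by (rule witness) (simp_all add: nr5[OF assms(1)])
qed

lemma rule19:
  assumes "a \<noteq> b" "n1 \<ge> 1" "n2 \<ge> 3" "n3 = 2" "n4 \<ge> 1" "n5 \<ge> 1" "n6 \<ge> 1"
  shows "\<exists>v\<in>BR (rw6 a b n1 n2 n3 n4 n5 n6). \<not> rich v"
proof -
  obtain k1 where o1: "n1 = 1 + k1" using assms(2) le_Suc_ex by blast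
  obtain k2 where o2: "n2 = 3 + k2" using assms(3) le_Suc_ex by blast
  obtain k4 where o4: "n4 = 1 + k4" using assms(5) le_Suc_ex by blast
  obtain k5 where o5: "n5 = 1 + k5" using assms(6) le_Suc_ex by blast
  obtain k6 where o6: "n6 = 1 + k6" using assms(7) le_Suc_ex by blast
  have "rw6 a b n1 n2 n3 n4 n5 n6 = (replicate k1 a) @ ([a] @ [b, b]) @ (replicate k2 b) @ ([b] @ [a, a] @ [b]) @ (replicate k4 b @ [a] @ replicate k5 a @ replicate k6 b) @ ([b]) @ []"
    using assms o1 o2 o4 o5 o6 by (simp add: rw6_def replicate_add numeral_eq_Suc replicate_app_Cons_same replicate_append_same)
  then show ?thesis by (rule witness) (simp_all add: nr4[OF assms(1)])
qed

lemma rule20: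
  assumes "a \<noteq> b" "n1 \<ge> 1" "n2 \<ge> 3" "n3 \<ge> 1" "n4 \<ge> 2" "n5 \<ge> 1" "n6 \<ge> 1"
  shows "\<exists>v\<in>BR (rw6 a b n1 n2 n3 n4 n5 n6). \<not> rich v"
proof -
  obtain k1 where o1: "n1 = 1 + k1" using assms(2) le_Suc_ex by blast
  obtain k2 where o2: "n2 = 3 + k2" using assms(3) le_Suc_ex by blast
  obtain k3 where o3: "n3 = 1 + k3" using assms(4) le_Suc_ex by blast
  obtain k4 where o4: "n4 = 2 + k4" using assms(5) le_Suc_ex by blast
  obtain k5 where o5: "n5 = 1 + k5" using assms(6) le_Suc_ex by blast
  obtain k6 where o6: "n6 = 1 + k6" using assms(7) le_Suc_ex by blast
  have "rw6 a b n1 n2 n3 n4 n5 n6 = (replicate k1 a) @ ([a] @ [b, b]) @ (replicate k2 b) @ ([b] @ [a]) @ (replicate k3 a @ replicate k4 b) @ ([b, b] @ [a]) @ (replicate k5 a @ [b] @ replicate k6 b)"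
    using assms o1 o2 o3 o4 o5 o6 by (simp add: rw6_def replicate_add numeral_eq_Suc replicate_app_Cons_same replicate_append_same)
  then show ?thesis by (rule witness) (simp_all add: nr5[OF assms(1)])
qed

lemma rule21:
  assumes "a \<noteq> b" "n1 \<ge> 2" "n2 = 1" "n3 = 1" "n4 \<ge> 1" "n5 \<ge> 1" "n6 \<ge> 3"
  shows "\<exists>v\<in>BR (rw6 a b n1 n2 n3 n4 n5 n6). \<not> rich v"
proof -
  obtain k1 where o1: "n1 = 2 + k1" using assms(2) le_Suc_ex by blast
  obtain k4 where o4: "n4 = 1 + k4" using assms(5) le_Suc_ex by blast
  obtain k5 where o5: "n5 = 1 + k5" using assms(6) le_Suc_ex by blast
  obtain k6 where o6: "n6 = 3 + k6" using assms(7) le_Suc_ex by blast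
  have "rw6 a b n1 n2 n3 n4 n5 n6 = (replicate k1 a) @ ([a, a] @ [b] @ [a] @ [b]) @ (replicate k4 b @ replicate k5 a) @ ([a] @ [b, b]) @ (replicate k6 b) @ ([b]) @ []"
    using assms o1 o4 o5 o6 by (simp add: rw6_def replicate_add numeral_eq_Suc replicate_app_Cons_same replicate_append_same)
  then show ?thesis by (rule witness) (simp_all add: nr3[OF assms(1)])
qed

lemma rule22:
  assumes "a \<noteq> b" "n1 \<ge> 2" "n2 = 1" "n3 \<ge> 2" "n4 \<ge> 2" "n5 \<ge> 1" "n6 \<ge> 1"
  shows "\<exists>v\<in>BR (rw6 a b n1 n2 n3 n4 n5 n6). \<not> rich v"
proof -
  obtain k1 where o1: "n1 = 2 + k1" using assms(2) le_Suc_ex by blast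
  obtain k3 where o3: "n3 = 2 + k3" using assms(4) le_Suc_ex by blast
  obtain k4 where o4: "n4 = 2 + k4" using assms(5) le_Suc_ex by blast
  obtain k5 where o5: "n5 = 1 + k5" using assms(6) le_Suc_ex by blast
  obtain k6 where o6: "n6 = 1 + k6" using assms(7) le_Suc_ex by blast
  have "rw6 a b n1 n2 n3 n4 n5 n6 = (replicate k1 a) @ ([a, a] @ [b] @ [a]) @ (replicate k3 a) @ ([a] @ [b, b]) @ (replicate k4 b @ replicate k5 a) @ ([a] @ [b]) @ (replicate k6 b)"
    using assms o1 o3 o4 o5 o6 by (simp add: rw6_def replicate_add numeral_eq_Suc replicate_app_Cons_same replicate_append_same)
  then show ?thesis by (rule witness) (simp_all add: nr2[OF assms(1)])
qed

lemma rule23: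
  assumes "a \<noteq> b" "n1 \<ge> 2" "n2 \<ge> 1" "n3 = 1" "n4 \<ge> 1" "n5 \<ge> 2" "n6 \<ge> 1"
  shows "\<exists>v\<in>BR (rw6 a b n1 n2 n3 n4 n5 n6). \<not> rich v"
proof -
  obtain k1 where o1: "n1 = 2 + k1" using assms(2) le_Suc_ex by blast
  obtain k2 where o2: "n2 = 1 + k2" using assms(3) le_Suc_ex by blast
  obtain k4 where o4: "n4 = 1 + k4" using assms(5) le_Suc_ex by blast
  obtain k5 where o5: "n5 = 2 + k5" using assms(6) le_Suc_ex by blast
  obtain k6 where o6: "n6 = 1 + k6" using assms(7) le_Suc_ex by blast
  have "rw6 a b n1 n2 n3 n4 n5 n6 = (replicate k1 a) @ ([a, a]) @ (replicate k2 b) @ ([b] @ [a] @ [b]) @ (replicate k4 b @ replicate k5 a) @ ([a, a] @ [b]) @ (replicate k6 b)"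
    using assms o1 o2 o4 o5 o6 by (simp add: rw6_def replicate_add numeral_eq_Suc replicate_app_Cons_same replicate_append_same)
  then show ?thesis by (rule witness) (simp_all add: nr1[OF assms(1)])
qed

lemma rule24:
  assumes "a \<noteq> b" "n1 \<ge> 2" "n2 \<ge> 1" "n3 \<ge> 2" "n4 = 1" "n5 = 1" "n6 \<ge> 1"
  shows "\<exists>v\<in>BR (rw6 a b n1 n2 n3 n4 n5 n6). \<not> rich v"
proof -
  obtain k1 where o1: "n1 = 2 + k1" using assms(2) le_Suc_ex by blast
  obtain k2 where o2: "n2 = 1 + k2" using assms(3) le_Suc_ex by blast
  obtain k3 where o3: "n3 = 2 + k3" using assms(4) le_Suc_ex by blast
  obtain k6 where o6: "n6 = 1 + k6" using assms(7) le_Suc_ex by blast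
  have "rw6 a b n1 n2 n3 n4 n5 n6 = (replicate k1 a) @ ([a, a]) @ (replicate k2 b) @ ([b]) @ (replicate k3 a) @ ([a, a] @ [b] @ [a] @ [b]) @ (replicate k6 b)"
    using assms o1 o2 o3 o6 by (simp add: rw6_def replicate_add numeral_eq_Suc replicate_app_Cons_same replicate_append_same)
  then show ?thesis by (rule witness) (simp_all add: nr0[OF assms(1)])
qed

lemma rule25:
  assumes "a \<noteq> b" "n1 \<ge> 3" "n2 = 1" "n3 = 1" "n4 \<ge> 2" "n5 \<ge> 1" "n6 \<ge> 1"
  shows "\<exists>v\<in>BR (rw6 a b n1 n2 n3 n4 n5 n6). \<not> rich v"
proof -
  obtain k1 where o1: "n1 = 3 + k1" using assms(2) le_Suc_ex by blast
  obtain k4 where o4: "n4 = 2 + k4" using assms(5) le_Suc_ex by blast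
  obtain k5 where o5: "n5 = 1 + k5" using assms(6) le_Suc_ex by blast
  obtain k6 where o6: "n6 = 1 + k6" using assms(7) le_Suc_ex by blast
  have "rw6 a b n1 n2 n3 n4 n5 n6 = (replicate k1 a) @ ([a, a]) @ [] @ ([a] @ [b] @ [a] @ [b, b]) @ (replicate k4 b @ replicate k5 a) @ ([a]) @ ([b] @ replicate k6 b)"
    using assms o1 o4 o5 o6 by (simp add: rw6_def replicate_add numeral_eq_Suc replicate_app_Cons_same replicate_append_same)
  then show ?thesis by (rule witness) (simp_all add: nr0[OF assms(1)])
qed

lemma rule26:
  assumes "a \<noteq> b" "n1 \<ge> 3" "n2 = 2" "n3 = 1" "n4 \<ge> 1" "n5 \<ge> 1" "n6 \<ge> 1"
  shows "\<exists>v\<in>BR (rw6 a b n1 n2 n3 n4 n5 n6). \<not> rich v"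
proof -
  obtain k1 where o1: "n1 = 3 + k1" using assms(2) le_Suc_ex by blast
  obtain k4 where o4: "n4 = 1 + k4" using assms(5) le_Suc_ex by blast
  obtain k5 where o5: "n5 = 1 + k5" using assms(6) le_Suc_ex by blast
  obtain k6 where o6: "n6 = 1 + k6" using assms(7) le_Suc_ex by blast
  have "rw6 a b n1 n2 n3 n4 n5 n6 = (replicate k1 a) @ ([a, a]) @ [] @ ([a] @ [b, b] @ [a] @ [b]) @ (replicate k4 b @ replicate k5 a) @ ([a]) @ ([b] @ replicate k6 b)"
    using assms o1 o4 o5 o6 by (simp add: rw6_def replicate_add numeral_eq_Suc replicate_app_Cons_same replicate_append_same)
  then show ?thesis by (rule witness) (simp_all add: nr1[OF assms(1)])
qed

lemma rule27:
  assumes "a \<noteq> b" "n1 \<ge> 3" "n2 \<ge> 1" "n3 \<ge> 1" "n4 = 1" "n5 = 1" "n6 \<ge> 2"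
  shows "\<exists>v\<in>BR (rw6 a b n1 n2 n3 n4 n5 n6). \<not> rich v"
proof -
  obtain k1 where o1: "n1 = 3 + k1" using assms(2) le_Suc_ex by blast
  obtain k2 where o2: "n2 = 1 + k2" using assms(3) le_Suc_ex by blast
  obtain k3 where o3: "n3 = 1 + k3" using assms(4) le_Suc_ex by blast
  obtain k6 where o6: "n6 = 2 + k6" using assms(7) le_Suc_ex by blast
  have "rw6 a b n1 n2 n3 n4 n5 n6 = (replicate k1 a) @ ([a]) @ [] @ ([a, a] @ [b]) @ (replicate k2 b @ replicate k3 a) @ ([a] @ [b] @ [a] @ [b, b]) @ (replicate k6 b)"
    using assms o1 o2 o3 o6 by (simp add: rw6_def replicate_add numeral_eq_Suc replicate_app_Cons_same replicate_append_same)
  then show ?thesis by (rule witness) (simp_all add: nr2[OF assms(1)])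
qed

lemma cover:
  assumes ab: "a \<noteq> b"
  shows "n1 \<ge> 1 \<Longrightarrow> n2 \<ge> 1 \<Longrightarrow> n3 \<ge> 1 \<Longrightarrow> n4 \<ge> 1 \<Longrightarrow> n5 \<ge> 1 \<Longrightarrow> n6 \<ge> 1 \<Longrightarrow>
    n1 + n2 + n3 + n4 + n5 + n6 > 7 \<Longrightarrow> \<not> Sgood n1 n2 n3 n4 n5 n6 \<Longrightarrow>
    \<exists>v\<in>BR (rw6 a b n1 n2 n3 n4 n5 n6). \<not> rich v"
  apply (cases "n1 \<le> 1")
  apply (cases "n2 \<le> 1")
  apply (cases "n3 \<le> 1")
  apply (cases "n4 \<le> 2")
  apply (cases "n4 \<le> 1")
  apply (cases "n5 \<le> 2")
  apply (cases "n6 \<le> 1")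
  apply linarith
  apply (cases "n5 \<le> 1")
  apply (cases "n6 \<le> 2")
  apply linarith
  apply (cases "n6 \<le> 3")
  apply (erule notE, unfold Sgood_def, rule disjI2, rule disjI2, rule disjI2, rule disjI2, rule disjI2, rule disjI2, rule disjI2, rule disjI2, rule disjI2, rule disjI2, intro conjI; linarith)
  apply (cases "n6 \<le> 4")
  apply (erule notE, unfold Sgood_def, rule disjI2, rule disjI2, rule disjI2, rule disjI2, rule disjI2, rule disjI2, rule disjI2, rule disjI2, rule disjI2, rule disjI2, intro conjI; linarith)
  apply (erule notE, unfold Sgood_def, rule disjI2, rule disjI2, rule disjI2, rule disjI2, rule disjI2, rule disjI2, rule disjI2, rule disjI2, rule disjI2, rule disjI2, intro conjI; linarith)
  apply (cases "n6 \<le> 2")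
  apply (erule notE, unfold Sgood_def, rule disjI2, rule disjI2, rule disjI2, rule disjI1, intro conjI; linarith)
  apply (rule rule7[OF ab]; linarith)
  apply (rule rule8[OF ab]; linarith)
  apply (cases "n5 \<le> 2")
  apply (cases "n6 \<le> 1")
  apply (cases "n5 \<le> 1")
  apply linarith
  apply (erule notE, unfold Sgood_def, rule disjI2, rule disjI1, intro conjI; linarith)
  apply (rule rule0[OF ab]; linarith)
  apply (rule rule9[OF ab]; linarith)
  apply (rule rule1[OF ab]; linarith)
  apply (cases "n5 \<le> 1")
  apply (cases "n3 \<le> 2")
  apply (cases "n4 \<le> 2")
  apply (cases "n4 \<le> 1")
  apply (cases "n6 \<le> 1")
  apply linarith
  apply (cases "n6 \<le> 2")
  apply (erule notE, unfold Sgood_def, rule disjI2, rule disjI2, rule disjI2, rule disjI2, rule disjI2, rule disjI2, rule disjI1, intro conjI; linarith)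
  apply (rule rule10[OF ab]; linarith)
  apply (cases "n6 \<le> 1")
  apply (erule notE, unfold Sgood_def, rule disjI2, rule disjI2, rule disjI2, rule disjI2, rule disjI2, rule disjI2, rule disjI2, rule disjI2, rule disjI1, intro conjI; linarith)
  apply (rule rule2[OF ab]; linarith)
  apply (rule rule3[OF ab]; linarith)
  apply (cases "n4 \<le> 1")
  apply (rule rule11[OF ab]; linarith)
  apply (rule rule5[OF ab]; linarith)
  apply (rule rule4[OF ab]; linarith)
  apply (cases "n4 \<le> 2")
  apply (cases "n2 \<le> 2")
  apply (cases "n3 \<le> 1")
  apply (cases "n4 \<le> 1")
  apply (cases "n5 \<le> 2")
  apply (cases "n6 \<le> 1")
  apply (cases "n5 \<le> 1")
  apply linarith
  apply (erule notE, unfold Sgood_def, rule disjI1, intro conjI; linarith)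
  apply (rule rule13[OF ab]; linarith)
  apply (rule rule8[OF ab]; linarith)
  apply (cases "n5 \<le> 1")
  apply (rule rule14[OF ab]; linarith)
  apply (cases "n5 \<le> 2")
  apply (rule rule15[OF ab]; linarith)
  apply (rule rule9[OF ab]; linarith)
  apply (cases "n5 \<le> 1")
  apply (cases "n4 \<le> 1")
  apply (cases "n3 \<le> 2")
  apply (cases "n6 \<le> 1")
  apply (erule notE, unfold Sgood_def, rule disjI2, rule disjI2, rule disjI1, intro conjI; linarith)
  apply (rule rule17[OF ab]; linarith)
  apply (rule rule11[OF ab]; linarith)
  apply (rule rule14[OF ab]; linarith)
  apply (rule rule6[OF ab]; linarith)
  apply (cases "n4 \<le> 1")
  apply (cases "n3 \<le> 1")
  apply (rule rule18[OF ab]; linarith)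
  apply (cases "n3 \<le> 2")
  apply (rule rule19[OF ab]; linarith)
  apply (cases "n5 \<le> 1")
  apply (rule rule11[OF ab]; linarith)
  apply (rule rule12[OF ab]; linarith)
  apply (rule rule20[OF ab]; linarith)
  apply (rule rule16[OF ab]; linarith)
  apply (cases "n1 \<le> 2")
  apply (cases "n2 \<le> 1")
  apply (cases "n3 \<le> 1")
  apply (cases "n4 \<le> 2")
  apply (cases "n5 \<le> 1")
  apply (cases "n6 \<le> 2")
  apply (cases "n4 \<le> 1")
  apply (cases "n6 \<le> 1")
  apply linarith
  apply (erule notE, unfold Sgood_def, rule disjI2, rule disjI2, rule disjI2, rule disjI2, rule disjI2, rule disjI2, rule disjI2, rule disjI1, intro conjI; linarith)
  apply (cases "n6 \<le> 1")
  apply (erule notE, unfold Sgood_def, rule disjI2, rule disjI2, rule disjI2, rule disjI2, rule disjI2, rule disjI1, intro conjI; linarith)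
  apply (rule rule0[OF ab]; linarith)
  apply (rule rule21[OF ab]; linarith)
  apply (rule rule23[OF ab]; linarith)
  apply (rule rule1[OF ab]; linarith)
  apply (cases "n4 \<le> 1")
  apply (cases "n5 \<le> 1")
  apply (rule rule24[OF ab]; linarith)
  apply (rule rule4[OF ab]; linarith)
  apply (rule rule22[OF ab]; linarith)
  apply (cases "n4 \<le> 2")
  apply (cases "n2 \<le> 2")
  apply (cases "n3 \<le> 1")
  apply (cases "n5 \<le> 1")
  apply (cases "n4 \<le> 1")
  apply (cases "n6 \<le> 1")
  apply (erule notE, unfold Sgood_def, rule disjI2, rule disjI2, rule disjI2, rule disjI2, rule disjI1, intro conjI; linarith)
  apply (rule rule13[OF ab]; linarith)
  apply (rule rule14[OF ab]; linarith)
  apply (rule rule23[OF ab]; linarith)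
  apply (cases "n5 \<le> 1")
  apply (cases "n4 \<le> 1")
  apply (rule rule24[OF ab]; linarith)
  apply (rule rule14[OF ab]; linarith)
  apply (rule rule6[OF ab]; linarith)
  apply (cases "n4 \<le> 1")
  apply (cases "n3 \<le> 1")
  apply (rule rule18[OF ab]; linarith)
  apply (cases "n3 \<le> 2")
  apply (rule rule19[OF ab]; linarith)
  apply (cases "n5 \<le> 1")
  apply (rule rule24[OF ab]; linarith)
  apply (rule rule12[OF ab]; linarith)
  apply (rule rule20[OF ab]; linarith)
  apply (rule rule16[OF ab]; linarith)
  apply (cases "n1 \<le> 3")
  apply (cases "n2 \<le> 1")
  apply (cases "n3 \<le> 1")
  apply (cases "n4 \<le> 1")
  apply (cases "n5 \<le> 1")
  apply (cases "n6 \<le> 1")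
  apply (erule notE, unfold Sgood_def, rule disjI2, rule disjI2, rule disjI2, rule disjI2, rule disjI2, rule disjI2, rule disjI2, rule disjI2, rule disjI2, rule disjI1, intro conjI; linarith)
  apply (rule rule27[OF ab]; linarith)
  apply (rule rule23[OF ab]; linarith)
  apply (rule rule25[OF ab]; linarith)
  apply (cases "n4 \<le> 1")
  apply (cases "n5 \<le> 1")
  apply (rule rule24[OF ab]; linarith)
  apply (rule rule4[OF ab]; linarith)
  apply (rule rule22[OF ab]; linarith)
  apply (cases "n4 \<le> 2")
  apply (cases "n2 \<le> 2")
  apply (cases "n3 \<le> 1")
  apply (rule rule26[OF ab]; linarith)
  apply (cases "n5 \<le> 1")
  apply (cases "n4 \<le> 1")
  apply (rule rule24[OF ab]; linarith)
  apply (rule rule14[OF ab]; linarith)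
  apply (rule rule6[OF ab]; linarith)
  apply (cases "n4 \<le> 1")
  apply (cases "n3 \<le> 1")
  apply (rule rule18[OF ab]; linarith)
  apply (cases "n3 \<le> 2")
  apply (rule rule19[OF ab]; linarith)
  apply (cases "n5 \<le> 1")
  apply (rule rule24[OF ab]; linarith)
  apply (rule rule12[OF ab]; linarith)
  apply (rule rule20[OF ab]; linarith)
  apply (rule rule16[OF ab]; linarith)
  apply (cases "n1 \<le> 4")
  apply (cases "n2 \<le> 1")
  apply (cases "n3 \<le> 1")
  apply (cases "n4 \<le> 1")
  apply (cases "n5 \<le> 1")
  apply (cases "n6 \<le> 1")
  apply (erule notE, unfold Sgood_def, rule disjI2, rule disjI2, rule disjI2, rule disjI2, rule disjI2, rule disjI2, rule disjI2, rule disjI2, rule disjI2, rule disjI1, intro conjI; linarith)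
  apply (rule rule27[OF ab]; linarith)
  apply (rule rule23[OF ab]; linarith)
  apply (rule rule25[OF ab]; linarith)
  apply (cases "n4 \<le> 1")
  apply (cases "n5 \<le> 1")
  apply (rule rule24[OF ab]; linarith)
  apply (rule rule4[OF ab]; linarith)
  apply (rule rule22[OF ab]; linarith)
  apply (cases "n4 \<le> 2")
  apply (cases "n2 \<le> 2")
  apply (cases "n3 \<le> 1")
  apply (rule rule26[OF ab]; linarith)
  apply (cases "n5 \<le> 1")
  apply (cases "n4 \<le> 1")
  apply (rule rule24[OF ab]; linarith)
  apply (rule rule14[OF ab]; linarith)
  apply (rule rule6[OF ab]; linarith)
  apply (cases "n4 \<le> 1")
  apply (cases "n3 \<le> 1")
  apply (rule rule18[OF ab]; linarith)
  apply (cases "n3 \<le> 2")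
  apply (rule rule19[OF ab]; linarith)
  apply (cases "n5 \<le> 1")
  apply (rule rule24[OF ab]; linarith)
  apply (rule rule12[OF ab]; linarith)
  apply (rule rule20[OF ab]; linarith)
  apply (rule rule16[OF ab]; linarith)
  apply (cases "n2 \<le> 1")
  apply (cases "n3 \<le> 1")
  apply (cases "n4 \<le> 1")
  apply (cases "n5 \<le> 1")
  apply (cases "n6 \<le> 1")
  apply (erule notE, unfold Sgood_def, rule disjI2, rule disjI2, rule disjI2, rule disjI2, rule disjI2, rule disjI2, rule disjI2, rule disjI2, rule disjI2, rule disjI1, intro conjI; linarith)
  apply (rule rule27[OF ab]; linarith)
  apply (rule rule23[OF ab]; linarith)
  apply (rule rule25[OF ab]; linarith)
  apply (cases "n4 \<le> 1")
  apply (cases "n5 \<le> 1")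
  apply (rule rule24[OF ab]; linarith)
  apply (rule rule4[OF ab]; linarith)
  apply (rule rule22[OF ab]; linarith)
  apply (cases "n4 \<le> 2")
  apply (cases "n2 \<le> 2")
  apply (cases "n3 \<le> 1")
  apply (rule rule26[OF ab]; linarith)
  apply (cases "n5 \<le> 1")
  apply (cases "n4 \<le> 1")
  apply (rule rule24[OF ab]; linarith)
  apply (rule rule14[OF ab]; linarith)
  apply (rule rule6[OF ab]; linarith)
  apply (cases "n4 \<le> 1")
  apply (cases "n3 \<le> 1")
  apply (rule rule18[OF ab]; linarith)
  apply (cases "n3 \<le> 2")
  apply (rule rule19[OF ab]; linarith)
  apply (cases "n5 \<le> 1")
  apply (rule rule24[OF ab]; linarith)
  apply (rule rule12[OF ab]; linarith)
  apply (rule rule20[OF ab]; linarith)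
  apply (rule rule16[OF ab]; linarith)
  done


lemma conc_good:
  assumes ab: "a \<noteq> b" and ne: "wb \<noteq> []" and chk: "list_all (\<lambda>(u, B). richc (u @ B)) (bp wb)"
  shows "\<forall>v\<in>BR (map (\<lambda>x. if x then a else b) wb). rich v"
proof
  fix v assume "v \<in> BR (map (\<lambda>x. if x then a else b) wb)"
  then obtain v' where v': "v' \<in> BR wb" "v = map (\<lambda>x. if x then a else b) v'"
    using BR_map[OF ne] by blast
  then obtain u B where uB: "(u, B) \<in> set (bp wb)" "v' = u @ B" using BR_bp[OF ne] by auto
  have "richc (u @ B)" using chk uB(1) by (auto simp: list_all_iff)
  then have "rich v'" using uB(2) by (simp add: rich_richc)
  then show "rich v" using v'(2) rich_map[OF inj_ab[OF ab]] by simp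
qed

lemma good_fam2:
  assumes ab: "a \<noteq> b"
  shows "\<forall>v\<in>BR ([a, b, a, b, a] @ replicate n b). rich v"
proof
  fix v assume v: "v \<in> BR ([a, b, a, b, a] @ replicate n b)"
  have "[a, b, a, b, a] @ replicate n b = rev (replicate n b @ [a, b, a, b, a])" by simp
  then have "rev v \<in> BR (replicate n b @ [a, b, a, b, a])" using BR_rev[OF v] by simp
  then have "rich (rev v)" using good_fam[of b a n] ab by auto
  then show "rich v" by simp
qed

lemma good_if:
  assumes ab: "a \<noteq> b" and S: "Sgood n1 n2 n3 n4 n5 n6"
  shows "\<forall>v\<in>BR (rw6 a b n1 n2 n3 n4 n5 n6). rich v"
  using S unfolding Sgood_def
proof (elim disjE conjE)
  assume "n1 = 1" "n2 = 2" "n3 = 1" "n4 = 1" "n5 = 2" "n6 = 1"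
  moreover have e: "rw6 a b 1 2 1 1 2 1 = map (\<lambda>x. if x then a else b) [True, False, False, True, False, True, True, False]"
    by (simp add: rw6_def numeral_eq_Suc)
  moreover have c: "list_all (\<lambda>(u, B). richc (u @ B)) (bp [True, False, False, True, False, True, True, False])" by code_simp
  have "\<forall>v\<in>BR (map (\<lambda>x. if x then a else b) [True, False, False, True, False, True, True, False]). rich v" by (rule conc_good[OF ab _ c]) simp
  ultimately show ?thesis by (simp only: e)
next
  assume "n1 = 1" "n2 = 1" "n3 = 1" "n4 = 2" "n5 = 2" "n6 = 1"
  moreover have e: "rw6 a b 1 1 1 2 2 1 = map (\<lambda>x. if x then a else b) [True, False, True, False, False, True, True, False]"
    by (simp add: rw6_def numeral_eq_Suc)
  moreover have c: "list_all (\<lambda>(u, B). richc (u @ B)) (bp [True, False, True, False, False, True, True, False])" by code_simp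
  have "\<forall>v\<in>BR (map (\<lambda>x. if x then a else b) [True, False, True, False, False, True, True, False]). rich v" by (rule conc_good[OF ab _ c]) simp
  ultimately show ?thesis by (simp only: e)
next
  assume "n1 = 1" "n2 = 2" "n3 = 2" "n4 = 1" "n5 = 1" "n6 = 1"
  moreover have e: "rw6 a b 1 2 2 1 1 1 = map (\<lambda>x. if x then a else b) [True, False, False, True, True, False, True, False]"
    by (simp add: rw6_def numeral_eq_Suc)
  moreover have c: "list_all (\<lambda>(u, B). richc (u @ B)) (bp [True, False, False, True, True, False, True, False])" by code_simp
  have "\<forall>v\<in>BR (map (\<lambda>x. if x then a else b) [True, False, False, True, True, False, True, False]). rich v" by (rule conc_good[OF ab _ c]) simp
  ultimately show ?thesis by (simp only: e)
next
  assume "n1 = 1" "n2 = 1" "n3 = 1" "n4 = 1" "n5 = 2" "n6 = 2"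
  moreover have e: "rw6 a b 1 1 1 1 2 2 = map (\<lambda>x. if x then a else b) [True, False, True, False, True, True, False, False]"
    by (simp add: rw6_def numeral_eq_Suc)
  moreover have c: "list_all (\<lambda>(u, B). richc (u @ B)) (bp [True, False, True, False, True, True, False, False])" by code_simp
  have "\<forall>v\<in>BR (map (\<lambda>x. if x then a else b) [True, False, True, False, True, True, False, False]). rich v" by (rule conc_good[OF ab _ c]) simp
  ultimately show ?thesis by (simp only: e)
next
  assume "n1 = 2" "n2 = 2" "n3 = 1" "n4 = 1" "n5 = 1" "n6 = 1"
  moreover have e: "rw6 a b 2 2 1 1 1 1 = map (\<lambda>x. if x then a else b) [True, True, False, False, True, False, True, False]"
    by (simp add: rw6_def numeral_eq_Suc)
  moreover have c: "list_all (\<lambda>(u, B). richc (u @ B)) (bp [True, True, False, False, True, False, True, False])" by code_simp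
  have "\<forall>v\<in>BR (map (\<lambda>x. if x then a else b) [True, True, False, False, True, False, True, False]). rich v" by (rule conc_good[OF ab _ c]) simp
  ultimately show ?thesis by (simp only: e)
next
  assume "n1 = 2" "n2 = 1" "n3 = 1" "n4 = 2" "n5 = 1" "n6 = 1"
  moreover have e: "rw6 a b 2 1 1 2 1 1 = map (\<lambda>x. if x then a else b) [True, True, False, True, False, False, True, False]"
    by (simp add: rw6_def numeral_eq_Suc)
  moreover have c: "list_all (\<lambda>(u, B). richc (u @ B)) (bp [True, True, False, True, False, False, True, False])" by code_simp
  have "\<forall>v\<in>BR (map (\<lambda>x. if x then a else b) [True, True, False, True, False, False, True, False]). rich v" by (rule conc_good[OF ab _ c]) simp
  ultimately show ?thesis by (simp only: e)
next
  assume "n1 = 1" "n2 = 1" "n3 = 2" "n4 = 1" "n5 = 1" "n6 = 2"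
  moreover have e: "rw6 a b 1 1 2 1 1 2 = map (\<lambda>x. if x then a else b) [True, False, True, True, False, True, False, False]"
    by (simp add: rw6_def numeral_eq_Suc)
  moreover have c: "list_all (\<lambda>(u, B). richc (u @ B)) (bp [True, False, True, True, False, True, False, False])" by code_simp
  have "\<forall>v\<in>BR (map (\<lambda>x. if x then a else b) [True, False, True, True, False, True, False, False]). rich v" by (rule conc_good[OF ab _ c]) simp
  ultimately show ?thesis by (simp only: e)
next
  assume "n1 = 2" "n2 = 1" "n3 = 1" "n4 = 1" "n5 = 1" "n6 = 2"
  moreover have e: "rw6 a b 2 1 1 1 1 2 = map (\<lambda>x. if x then a else b) [True, True, False, True, False, True, False, False]"
    by (simp add: rw6_def numeral_eq_Suc)
  moreover have c: "list_all (\<lambda>(u, B). richc (u @ B)) (bp [True, True, False, True, False, True, False, False])" by code_simp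
  have "\<forall>v\<in>BR (map (\<lambda>x. if x then a else b) [True, True, False, True, False, True, False, False]). rich v" by (rule conc_good[OF ab _ c]) simp
  ultimately show ?thesis by (simp only: e)
next
  assume "n1 = 1" "n2 = 1" "n3 = 2" "n4 = 2" "n5 = 1" "n6 = 1"
  moreover have e: "rw6 a b 1 1 2 2 1 1 = map (\<lambda>x. if x then a else b) [True, False, True, True, False, False, True, False]"
    by (simp add: rw6_def numeral_eq_Suc)
  moreover have c: "list_all (\<lambda>(u, B). richc (u @ B)) (bp [True, False, True, True, False, False, True, False])" by code_simp
  have "\<forall>v\<in>BR (map (\<lambda>x. if x then a else b) [True, False, True, True, False, False, True, False]). rich v" by (rule conc_good[OF ab _ c]) simp
  ultimately show ?thesis by (simp only: e)
next
  assume "n1 \<ge> 3" "n2 = 1" "n3 = 1" "n4 = 1" "n5 = 1" "n6 = 1"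
  moreover have "rw6 a b n1 1 1 1 1 1 = replicate n1 a @ [b, a, b, a, b]" by (simp add: rw6_def)
  ultimately show ?thesis using good_fam[OF ab] by simp
next
  assume "n1 = 1" "n2 = 1" "n3 = 1" "n4 = 1" "n5 = 1" "n6 \<ge> 3"
  moreover have "rw6 a b 1 1 1 1 1 n6 = [a, b, a, b, a] @ replicate n6 b" by (simp add: rw6_def)
  ultimately show ?thesis using good_fam2[OF ab] by simp
qed

lemma good_iff:
  assumes ab: "a \<noteq> b" and n: "n1 \<ge> 1" "n2 \<ge> 1" "n3 \<ge> 1" "n4 \<ge> 1" "n5 \<ge> 1" "n6 \<ge> 1"
    and len: "n1 + n2 + n3 + n4 + n5 + n6 > 7"
  shows "(\<forall>v\<in>BR (rw6 a b n1 n2 n3 n4 n5 n6). rich v) \<longleftrightarrow> Sgood n1 n2 n3 n4 n5 n6"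
  using good_if[OF ab] cover[OF ab n len] by blast


section \<open>Run-length encodings\<close>

lemma rle_Nil: "rle w [] \<longleftrightarrow> w = []"
  by (auto simp: rle_def)

lemma rle_Cons: "rle w ((c, n) # r) \<longleftrightarrow>
    (\<exists>w1. w = replicate n c @ w1 \<and> n \<ge> 1 \<and> rle w1 r \<and> (r = [] \<or> fst (hd r) \<noteq> c))"
proof
  assume A: "rle w ((c, n) # r)"
  have 1: "w = replicate n c @ concat (map (\<lambda>(c, n). replicate n c) r)" using A by (simp add: rle_def)
  have 2: "n \<ge> 1" "\<forall>p\<in>set r. snd p \<ge> 1" using A by (auto simp: rle_def)
  have 3: "\<forall>i. Suc i < length r \<longrightarrow> fst (r ! i) \<noteq> fst (r ! Suc i)"
  proof (intro allI impI)
    fix i assume "Suc i < length r"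
    then have "Suc (Suc i) < length ((c, n) # r)" by simp
    then show "fst (r ! i) \<noteq> fst (r ! Suc i)" using A unfolding rle_def
      by (metis nth_Cons_Suc)
  qed
  have 4: "r = [] \<or> fst (hd r) \<noteq> c"
  proof (cases r)
    case (Cons x r')
    have "Suc 0 < length ((c, n) # r)" using Cons by simp
    then have "fst (((c, n) # r) ! 0) \<noteq> fst (((c, n) # r) ! Suc 0)" using A unfolding rle_def by blast
    then show ?thesis using Cons by simp
  qed simp
  show "\<exists>w1. w = replicate n c @ w1 \<and> n \<ge> 1 \<and> rle w1 r \<and> (r = [] \<or> fst (hd r) \<noteq> c)"
    using 1 2 3 4 unfolding rle_def by blast
next
  assume "\<exists>w1. w = replicate n c @ w1 \<and> n \<ge> 1 \<and> rle w1 r \<and> (r = [] \<or> fst (hd r) \<noteq> c)"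
  then obtain w1 where B: "w = replicate n c @ w1" "n \<ge> 1" "rle w1 r" "r = [] \<or> fst (hd r) \<noteq> c" by blast
  have "\<forall>i. Suc i < length ((c, n) # r) \<longrightarrow> fst (((c, n) # r) ! i) \<noteq> fst (((c, n) # r) ! Suc i)"
  proof (intro allI impI)
    fix i assume i: "Suc i < length ((c, n) # r)"
    show "fst (((c, n) # r) ! i) \<noteq> fst (((c, n) # r) ! Suc i)"
    proof (cases i)
      case 0 then show ?thesis using B(4) i by (cases r) auto
    next
      case (Suc j) then show ?thesis using B(3) i unfolding rle_def by simp
    qed
  qed
  then show "rle w ((c, n) # r)" using B unfolding rle_def by auto
qed

lemma rle_hd: "rle w ((c, n) # r) \<Longrightarrow> w \<noteq> [] \<and> hd w = c"
  by (auto simp: rle_Cons)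

lemma rle_unique: "rle w cs \<Longrightarrow> rle w cs' \<Longrightarrow> cs = cs'"
proof (induction cs arbitrary: w cs')
  case Nil
  then have w: "w = []" by (simp add: rle_Nil)
  show ?case
  proof (rule ccontr)
    assume "[] \<noteq> cs'"
    then obtain c n r' where cs': "cs' = (c, n) # r'" by (metis list.exhaust prod.exhaust)
    then obtain w1 where "w = replicate n c @ w1" "n \<ge> 1" using Nil.prems(2)[unfolded cs' rle_Cons] by blast
    then show False using w by simp
  qed
next
  case (Cons p r)
  obtain c n where p: "p = (c, n)" by (cases p)
  obtain w1 where A: "w = replicate n c @ w1" "n \<ge> 1" "rle w1 r" "r = [] \<or> fst (hd r) \<noteq> c"
    using Cons.prems(1)[unfolded p rle_Cons] by blast
  have "w \<noteq> []" using A by simp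
  then have "cs' \<noteq> []" using Cons.prems(2) by (auto simp: rle_Nil)
  then obtain c' n' r' where cs': "cs' = (c', n') # r'" by (metis list.exhaust prod.exhaust)
  obtain w1' where B: "w = replicate n' c' @ w1'" "n' \<ge> 1" "rle w1' r'" "r' = [] \<or> fst (hd r') \<noteq> c'"
    using Cons.prems(2)[unfolded cs' rle_Cons] by blast
  have h1: "hd w = c" using rle_hd[OF Cons.prems(1)[unfolded p]] by blast
  have h2: "hd w = c'" using rle_hd[OF Cons.prems(2)[unfolded cs']] by blast
  have cc: "c' = c" using h1 h2 by simp
  have hdw: "hd w1 \<noteq> c" if "w1 \<noteq> []" "rle w1 r" "r = [] \<or> fst (hd r) \<noteq> c" for w1 r
  proof -
    have "r \<noteq> []" using that by (auto simp: rle_Nil)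
    then obtain c2 n2 rr where r: "r = (c2, n2) # rr" by (metis list.exhaust prod.exhaust)
    then have "hd w1 = c2" using rle_hd[OF that(2)[unfolded r]] by blast
    moreover have "c2 \<noteq> c" using that(3) r by simp
    ultimately show ?thesis by simp
  qed
  have nn: "n = n'"
  proof (rule ccontr)
    assume "n \<noteq> n'"
    then consider "n < n'" | "n' < n" by linarith
    then show False
    proof cases
      case 1
      then have "replicate n' c = replicate n c @ replicate (n' - n) c"
        by (simp add: replicate_add[symmetric])
      then have "w1 = replicate (n' - n) c @ w1'" using A(1) B(1) cc by simp
      moreover have "n' - n \<noteq> 0" using 1 by simp
      ultimately have "w1 \<noteq> [] \<and> hd w1 = c" by (cases "n' - n") auto
      then show False using hdw[OF _ A(3,4)] by blast
    next
      case 2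
      then have "replicate n c = replicate n' c @ replicate (n - n') c"
        by (simp add: replicate_add[symmetric])
      then have "w1' = replicate (n - n') c @ w1" using A(1) B(1) cc by simp
      moreover have "n - n' \<noteq> 0" using 2 by simp
      ultimately have "w1' \<noteq> [] \<and> hd w1' = c" by (cases "n - n'") auto
      then show False using hdw[OF _ B(3)] B(4) cc by blast
    qed
  qed
  then have "w1 = w1'" using A(1) B(1) cc by simp
  then have "r = r'" using Cons.IH A(3) B(3) by blast
  then show ?case using p cs' cc nn by simp
qed

lemma rle_exists: "\<exists>cs. rle w cs"
proof (induction w)
  case Nil then show ?case using rle_Nil by blast
next
  case (Cons x w)
  then obtain cs where cs: "rle w cs" by blast
  show ?case
  proof (cases "cs \<noteq> [] \<and> fst (hd cs) = x")
    case True
    then obtain r where cs2: "cs = (x, snd (hd cs)) # r" by (cases cs) auto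
    define n where "n = snd (hd cs)"
    have cs2: "cs = (x, n) # r" using cs2 n_def by simp
    then obtain w1 where W: "w = replicate n x @ w1" "n \<ge> 1" "rle w1 r" "r = [] \<or> fst (hd r) \<noteq> x"
      using cs[unfolded cs2 rle_Cons] by blast
    have "x # w = replicate (Suc n) x @ w1" using W(1) by simp
    then have "rle (x # w) ((x, Suc n) # r)" unfolding rle_Cons
      by (intro exI[of _ w1]) (use W(3,4) in simp)
    then show ?thesis by blast
  next
    case False
    have "x # w = replicate 1 x @ w" by simp
    moreover have "cs = [] \<or> fst (hd cs) \<noteq> x" using False by blast
    ultimately have "rle (x # w) ((x, 1) # cs)" unfolding rle_Cons
      by (intro exI[of _ w]) (use cs in simp)
    then show ?thesis by blast
  qed
qed

lemma runs_eq: "rle w cs \<Longrightarrow> runs w = length cs"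
  unfolding runs_def using rle_unique by (metis theI)

lemma rle_rw6:
  assumes "c \<noteq> d" "n1 \<ge> 1" "n2 \<ge> 1" "n3 \<ge> 1" "n4 \<ge> 1" "n5 \<ge> 1" "n6 \<ge> 1"
  shows "rle (rw6 c d n1 n2 n3 n4 n5 n6) [(c, n1), (d, n2), (c, n3), (d, n4), (c, n5), (d, n6)]"
  using assms unfolding rw6_def by (simp add: rle_Cons rle_Nil)

lemma rw6_inj:
  assumes "c \<noteq> d" "n1 \<ge> 1" "n2 \<ge> 1" "n3 \<ge> 1" "n4 \<ge> 1" "n5 \<ge> 1" "n6 \<ge> 1"
    "m1 \<ge> 1" "m2 \<ge> 1" "m3 \<ge> 1" "m4 \<ge> 1" "m5 \<ge> 1" "m6 \<ge> 1"
  shows "rw6 c d n1 n2 n3 n4 n5 n6 = rw6 c d m1 m2 m3 m4 m5 m6 \<longleftrightarrow>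
     n1 = m1 \<and> n2 = m2 \<and> n3 = m3 \<and> n4 = m4 \<and> n5 = m5 \<and> n6 = m6"
proof
  assume "rw6 c d n1 n2 n3 n4 n5 n6 = rw6 c d m1 m2 m3 m4 m5 m6"
  then have "rle (rw6 c d n1 n2 n3 n4 n5 n6) [(c, m1), (d, m2), (c, m3), (d, m4), (c, m5), (d, m6)]"
    using rle_rw6[OF assms(1) assms(8-13)] by simp
  with rle_rw6[OF assms(1-7)] show "n1 = m1 \<and> n2 = m2 \<and> n3 = m3 \<and> n4 = m4 \<and> n5 = m5 \<and> n6 = m6"
    using rle_unique by fastforce
qed simp

lemma runs6:
  assumes ab: "a \<noteq> b" and set: "set w \<subseteq> {a, b}" and r6: "runs w = 6"
  shows "\<exists>n1 n2 n3 n4 n5 n6. n1 \<ge> 1 \<and> n2 \<ge> 1 \<and> n3 \<ge> 1 \<and> n4 \<ge> 1 \<and> n5 \<ge> 1 \<and> n6 \<ge> 1 \<and>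
     (w = rw6 a b n1 n2 n3 n4 n5 n6 \<or> w = rw6 b a n1 n2 n3 n4 n5 n6)"
proof -
  obtain cs where cs: "rle w cs" using rle_exists by blast
  then have "length cs = 6" using r6 runs_eq by metis
  then obtain p1 p2 p3 p4 p5 p6 where "cs = [p1, p2, p3, p4, p5, p6]"
    by (auto simp: length_Suc_conv numeral_eq_Suc)
  moreover obtain c1 n1 where "p1 = (c1, n1)" by (cases p1)
  moreover obtain c2 n2 where "p2 = (c2, n2)" by (cases p2)
  moreover obtain c3 n3 where "p3 = (c3, n3)" by (cases p3)
  moreover obtain c4 n4 where "p4 = (c4, n4)" by (cases p4)
  moreover obtain c5 n5 where "p5 = (c5, n5)" by (cases p5)
  moreover obtain c6 n6 where "p6 = (c6, n6)" by (cases p6)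
  ultimately have cs6: "rle w [(c1, n1), (c2, n2), (c3, n3), (c4, n4), (c5, n5), (c6, n6)]" using cs by simp
  then obtain w1 w2 w3 w4 w5 w6 where R:
    "w = replicate n1 c1 @ w1" "n1 \<ge> 1" "c2 \<noteq> c1"
    "w1 = replicate n2 c2 @ w2" "n2 \<ge> 1" "c3 \<noteq> c2"
    "w2 = replicate n3 c3 @ w3" "n3 \<ge> 1" "c4 \<noteq> c3"
    "w3 = replicate n4 c4 @ w4" "n4 \<ge> 1" "c5 \<noteq> c4"
    "w4 = replicate n5 c5 @ w5" "n5 \<ge> 1" "c6 \<noteq> c5"
    "w5 = replicate n6 c6 @ w6" "n6 \<ge> 1" "rle w6 []"
    unfolding rle_Cons by auto
  have w: "w = rw6 c1 c2 n1 n2 n3 n4 n5 n6" and eqs: "c3 = c1" "c4 = c2" "c5 = c1" "c6 = c2"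
  proof -
    have cin: "c1 \<in> {a, b}" "c2 \<in> {a, b}" "c3 \<in> {a, b}" "c4 \<in> {a, b}" "c5 \<in> {a, b}" "c6 \<in> {a, b}"
      using set R by (auto simp: rle_Nil dest!: subsetD[of _ _ c1] subsetD[of _ _ c2] subsetD[of _ _ c3]
          subsetD[of _ _ c4] subsetD[of _ _ c5] subsetD[of _ _ c6])
    show "c3 = c1" "c4 = c2" "c5 = c1" "c6 = c2" using cin R by auto
    then show "w = rw6 c1 c2 n1 n2 n3 n4 n5 n6" using R unfolding rw6_def by (simp add: rle_Nil)
  qed
  have "c1 \<in> {a, b}" "c2 \<in> {a, b}" using set R by (cases n1; cases n2; auto)+
  then have "(c1 = a \<and> c2 = b) \<or> (c1 = b \<and> c2 = a)" using R(3) by auto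
  then show ?thesis using w R by blast
qed

section \<open>The set T\<close>

lemma compl_rw6: "a \<noteq> b \<Longrightarrow> compl a b (rw6 a b n1 n2 n3 n4 n5 n6) = rw6 b a n1 n2 n3 n4 n5 n6"
  "a \<noteq> b \<Longrightarrow> compl a b (rw6 b a n1 n2 n3 n4 n5 n6) = rw6 a b n1 n2 n3 n4 n5 n6"
  by (simp_all add: compl_def rw6_def swap_ab_def)

lemma T_char:
  assumes ab: "a \<noteq> b"
  shows "u \<in> T_closure a b \<longleftrightarrow>
    u = rw6 a b 1 2 1 1 2 1 \<or>
    u = rw6 a b 1 1 1 2 2 1 \<or>
    u = rw6 a b 1 2 2 1 1 1 \<or>
    u = rw6 a b 1 1 1 1 2 2 \<or>
    u = rw6 a b 2 2 1 1 1 1 \<or>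
    u = rw6 a b 2 1 1 2 1 1 \<or>
    u = rw6 a b 1 1 2 1 1 2 \<or>
    u = rw6 a b 2 1 1 1 1 2 \<or>
    u = rw6 a b 1 1 2 2 1 1 \<or>
    (\<exists>n\<ge>3. u = rw6 a b n 1 1 1 1 1) \<or> (\<exists>n\<ge>3. u = rw6 a b 1 1 1 1 1 n)"
proof -
  have L: "[a, b, b, a, b, a, a, b] = rw6 a b 1 2 1 1 2 1"
    "[a, b, a, b, b, a, a, b] = rw6 a b 1 1 1 2 2 1"
    "[a, b, a, b, a, a, b, b] = rw6 a b 1 1 1 1 2 2"
    "[a, a, b, a, b, b, a, b] = rw6 a b 2 1 1 2 1 1"
    "[a, a, b, a, b, a, b, b] = rw6 a b 2 1 1 1 1 2"
    "[a, b, a, a, b, b, a, b] = rw6 a b 1 1 2 2 1 1"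
    by (simp_all add: rw6_def numeral_eq_Suc)
  have R: "rev (compl a b (rw6 a b 1 2 1 1 2 1)) = rw6 a b 1 2 1 1 2 1"
    "rev (compl a b (rw6 a b 1 1 1 2 2 1)) = rw6 a b 1 2 2 1 1 1"
    "rev (compl a b (rw6 a b 1 1 1 1 2 2)) = rw6 a b 2 2 1 1 1 1"
    "rev (compl a b (rw6 a b 2 1 1 2 1 1)) = rw6 a b 1 1 2 1 1 2"
    "rev (compl a b (rw6 a b 2 1 1 1 1 2)) = rw6 a b 2 1 1 1 1 2"
    "rev (compl a b (rw6 a b 1 1 2 2 1 1)) = rw6 a b 1 1 2 2 1 1"
    using ab by (simp_all add: rw6_def numeral_eq_Suc compl_def swap_ab_def)
  have F1: "replicate n a @ [b, a, b, a, b] = rw6 a b n 1 1 1 1 1" for n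
    by (simp add: rw6_def)
  have F2: "rev (compl a b (rw6 a b n 1 1 1 1 1)) = rw6 a b 1 1 1 1 1 n" for n
    using ab by (simp add: rw6_def compl_def swap_ab_def rev_replicate)
  have T: "x \<in> T_set a b \<longleftrightarrow> x = [a, b, b, a, b, a, a, b] \<or> x = [a, b, a, b, b, a, a, b] \<or>
      x = [a, b, a, b, a, a, b, b] \<or> x = [a, a, b, a, b, b, a, b] \<or> x = [a, a, b, a, b, a, b, b] \<or>
      x = [a, b, a, a, b, b, a, b] \<or> (\<exists>n\<ge>3. x = replicate n a @ [b, a, b, a, b])" for x
    unfolding T_set_def by blast
  have "u \<in> T_closure a b \<longleftrightarrow> u \<in> T_set a b \<or> (\<exists>x. x \<in> T_set a b \<and> u = rev (compl a b x))"
    unfolding T_closure_def by blast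
  also have "\<dots> \<longleftrightarrow> u = [a, b, b, a, b, a, a, b] \<or> u = [a, b, a, b, b, a, a, b] \<or>
      u = [a, b, a, b, a, a, b, b] \<or> u = [a, a, b, a, b, b, a, b] \<or> u = [a, a, b, a, b, a, b, b] \<or>
      u = [a, b, a, a, b, b, a, b] \<or> (\<exists>n\<ge>3. u = replicate n a @ [b, a, b, a, b]) \<or>
      u = rev (compl a b [a, b, b, a, b, a, a, b]) \<or> u = rev (compl a b [a, b, a, b, b, a, a, b]) \<or>
      u = rev (compl a b [a, b, a, b, a, a, b, b]) \<or> u = rev (compl a b [a, a, b, a, b, b, a, b]) \<or>
      u = rev (compl a b [a, a, b, a, b, a, b, b]) \<or> u = rev (compl a b [a, b, a, a, b, b, a, b]) \<or>
      (\<exists>n\<ge>3. u = rev (compl a b (replicate n a @ [b, a, b, a, b])))"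
    unfolding T by blast
  also have "\<dots> \<longleftrightarrow> u = rw6 a b 1 2 1 1 2 1 \<or> u = rw6 a b 1 1 1 2 2 1 \<or> u = rw6 a b 1 1 1 1 2 2 \<or>
    u = rw6 a b 2 1 1 2 1 1 \<or> u = rw6 a b 2 1 1 1 1 2 \<or> u = rw6 a b 1 1 2 2 1 1 \<or>
    (\<exists>n\<ge>3. u = rw6 a b n 1 1 1 1 1) \<or>
    u = rw6 a b 1 2 1 1 2 1 \<or> u = rw6 a b 1 2 2 1 1 1 \<or> u = rw6 a b 2 2 1 1 1 1 \<or>
    u = rw6 a b 1 1 2 1 1 2 \<or> u = rw6 a b 2 1 1 1 1 2 \<or> u = rw6 a b 1 1 2 2 1 1 \<or>
    (\<exists>n\<ge>3. u = rw6 a b 1 1 1 1 1 n)"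
    by (simp only: L F1 R F2)
  also have "\<dots> \<longleftrightarrow> u = rw6 a b 1 2 1 1 2 1 \<or>
      u = rw6 a b 1 1 1 2 2 1 \<or>
      u = rw6 a b 1 2 2 1 1 1 \<or>
      u = rw6 a b 1 1 1 1 2 2 \<or>
      u = rw6 a b 2 2 1 1 1 1 \<or>
      u = rw6 a b 2 1 1 2 1 1 \<or>
      u = rw6 a b 1 1 2 1 1 2 \<or>
      u = rw6 a b 2 1 1 1 1 2 \<or>
      u = rw6 a b 1 1 2 2 1 1 \<or>
      (\<exists>n\<ge>3. u = rw6 a b n 1 1 1 1 1) \<or> (\<exists>n\<ge>3. u = rw6 a b 1 1 1 1 1 n)"
    by argo
  finally show ?thesis .
qed

lemma T_iff:
  assumes ab: "a \<noteq> b" and n: "n1 \<ge> 1" "n2 \<ge> 1" "n3 \<ge> 1" "n4 \<ge> 1" "n5 \<ge> 1" "n6 \<ge> 1"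
  shows "rw6 a b n1 n2 n3 n4 n5 n6 \<in> T_closure a b \<longleftrightarrow> Sgood n1 n2 n3 n4 n5 n6"
proof -
  have I: "rw6 a b n1 n2 n3 n4 n5 n6 = rw6 a b m1 m2 m3 m4 m5 m6 \<longleftrightarrow>
      n1 = m1 \<and> n2 = m2 \<and> n3 = m3 \<and> n4 = m4 \<and> n5 = m5 \<and> n6 = m6"
    if "m1 \<ge> 1" "m2 \<ge> 1" "m3 \<ge> 1" "m4 \<ge> 1" "m5 \<ge> 1" "m6 \<ge> 1" for m1 m2 m3 m4 m5 m6
    using rw6_inj[OF ab n that] .
  have E1: "(\<exists>m\<ge>3. rw6 a b n1 n2 n3 n4 n5 n6 = rw6 a b m 1 1 1 1 1) \<longleftrightarrow>
      (n1 \<ge> 3 \<and> n2 = 1 \<and> n3 = 1 \<and> n4 = 1 \<and> n5 = 1 \<and> n6 = 1)"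
  proof
    assume "\<exists>m\<ge>3. rw6 a b n1 n2 n3 n4 n5 n6 = rw6 a b m 1 1 1 1 1"
    then obtain m where "m \<ge> 3" "rw6 a b n1 n2 n3 n4 n5 n6 = rw6 a b m 1 1 1 1 1" by blast
    then show "n1 \<ge> 3 \<and> n2 = 1 \<and> n3 = 1 \<and> n4 = 1 \<and> n5 = 1 \<and> n6 = 1" using I[of m 1 1 1 1 1] by simp
  qed blast
  have E2: "(\<exists>m\<ge>3. rw6 a b n1 n2 n3 n4 n5 n6 = rw6 a b 1 1 1 1 1 m) \<longleftrightarrow>
      (n1 = 1 \<and> n2 = 1 \<and> n3 = 1 \<and> n4 = 1 \<and> n5 = 1 \<and> n6 \<ge> 3)"
  proof
    assume "\<exists>m\<ge>3. rw6 a b n1 n2 n3 n4 n5 n6 = rw6 a b 1 1 1 1 1 m"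
    then obtain m where "m \<ge> 3" "rw6 a b n1 n2 n3 n4 n5 n6 = rw6 a b 1 1 1 1 1 m" by blast
    then show "n1 = 1 \<and> n2 = 1 \<and> n3 = 1 \<and> n4 = 1 \<and> n5 = 1 \<and> n6 \<ge> 3" using I[of 1 1 1 1 1 m] by simp
  qed blast
  have I0: "rw6 a b n1 n2 n3 n4 n5 n6 = rw6 a b 1 2 1 1 2 1 \<longleftrightarrow> n1 = 1 \<and> n2 = 2 \<and> n3 = 1 \<and> n4 = 1 \<and> n5 = 2 \<and> n6 = 1"
    by (rule I) simp_all
  have I1: "rw6 a b n1 n2 n3 n4 n5 n6 = rw6 a b 1 1 1 2 2 1 \<longleftrightarrow> n1 = 1 \<and> n2 = 1 \<and> n3 = 1 \<and> n4 = 2 \<and> n5 = 2 \<and> n6 = 1"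
    by (rule I) simp_all
  have I2: "rw6 a b n1 n2 n3 n4 n5 n6 = rw6 a b 1 2 2 1 1 1 \<longleftrightarrow> n1 = 1 \<and> n2 = 2 \<and> n3 = 2 \<and> n4 = 1 \<and> n5 = 1 \<and> n6 = 1"
    by (rule I) simp_all
  have I3: "rw6 a b n1 n2 n3 n4 n5 n6 = rw6 a b 1 1 1 1 2 2 \<longleftrightarrow> n1 = 1 \<and> n2 = 1 \<and> n3 = 1 \<and> n4 = 1 \<and> n5 = 2 \<and> n6 = 2"
    by (rule I) simp_all
  have I4: "rw6 a b n1 n2 n3 n4 n5 n6 = rw6 a b 2 2 1 1 1 1 \<longleftrightarrow> n1 = 2 \<and> n2 = 2 \<and> n3 = 1 \<and> n4 = 1 \<and> n5 = 1 \<and> n6 = 1"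
    by (rule I) simp_all
  have I5: "rw6 a b n1 n2 n3 n4 n5 n6 = rw6 a b 2 1 1 2 1 1 \<longleftrightarrow> n1 = 2 \<and> n2 = 1 \<and> n3 = 1 \<and> n4 = 2 \<and> n5 = 1 \<and> n6 = 1"
    by (rule I) simp_all
  have I6: "rw6 a b n1 n2 n3 n4 n5 n6 = rw6 a b 1 1 2 1 1 2 \<longleftrightarrow> n1 = 1 \<and> n2 = 1 \<and> n3 = 2 \<and> n4 = 1 \<and> n5 = 1 \<and> n6 = 2"
    by (rule I) simp_all
  have I7: "rw6 a b n1 n2 n3 n4 n5 n6 = rw6 a b 2 1 1 1 1 2 \<longleftrightarrow> n1 = 2 \<and> n2 = 1 \<and> n3 = 1 \<and> n4 = 1 \<and> n5 = 1 \<and> n6 = 2"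
    by (rule I) simp_all
  have I8: "rw6 a b n1 n2 n3 n4 n5 n6 = rw6 a b 1 1 2 2 1 1 \<longleftrightarrow> n1 = 1 \<and> n2 = 1 \<and> n3 = 2 \<and> n4 = 2 \<and> n5 = 1 \<and> n6 = 1"
    by (rule I) simp_all
  show ?thesis unfolding T_char[OF ab] E1 E2 Sgood_def I0 I1 I2 I3 I4 I5 I6 I7 I8 ..
qed

lemma T_hd:
  assumes ab: "a \<noteq> b" and u: "u \<in> T_closure a b"
  shows "u \<noteq> [] \<and> hd u = a"
  using u unfolding T_char[OF ab]
  by (elim disjE exE conjE) (simp_all add: rw6_def numeral_eq_Suc)

lemma T_not:
  assumes ab: "a \<noteq> b" and n: "n1 \<ge> 1"
  shows "rw6 b a n1 n2 n3 n4 n5 n6 \<notin> T_closure a b"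
proof
  assume A: "rw6 b a n1 n2 n3 n4 n5 n6 \<in> T_closure a b"
  have "hd (rw6 b a n1 n2 n3 n4 n5 n6) = b" using n by (cases n1) (auto simp: rw6_def)
  then show False using T_hd[OF ab A] ab by simp
qed


theorem mainTheorem10:
  fixes a b :: 'x and w :: "'x list"
  assumes "a \<noteq> b"
    and "set w \<subseteq> {a, b}"
    and "length w > 7"
    and "runs w = 6"
  shows "(\<forall>v \<in> BR w. rich v) \<longleftrightarrow>
         (w \<in> T_closure a b \<or> compl a b w \<in> T_closure a b)"
proof -
  note ab = assms(1)
  obtain n1 n2 n3 n4 n5 n6 where n: "n1 \<ge> 1" "n2 \<ge> 1" "n3 \<ge> 1" "n4 \<ge> 1" "n5 \<ge> 1" "n6 \<ge> 1"
    and w: "w = rw6 a b n1 n2 n3 n4 n5 n6 \<or> w = rw6 b a n1 n2 n3 n4 n5 n6"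
    using runs6[OF assms(1,2,4)] by blast
  have len: "n1 + n2 + n3 + n4 + n5 + n6 > 7" using w assms(3) by (auto simp: rw6_def)
  from w show ?thesis
  proof
    assume w1: "w = rw6 a b n1 n2 n3 n4 n5 n6"
    have "(\<forall>v \<in> BR w. rich v) \<longleftrightarrow> Sgood n1 n2 n3 n4 n5 n6"
      unfolding w1 by (rule good_iff[OF ab n len])
    moreover have "w \<in> T_closure a b \<longleftrightarrow> Sgood n1 n2 n3 n4 n5 n6"
      unfolding w1 by (rule T_iff[OF ab n])
    moreover have "compl a b w \<notin> T_closure a b"
      unfolding w1 compl_rw6(1)[OF ab] by (rule T_not[OF ab n(1)])
    ultimately show ?thesis by blast
  next
    assume w2: "w = rw6 b a n1 n2 n3 n4 n5 n6"
    have ba: "b \<noteq> a" using ab by simp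
    have "(\<forall>v \<in> BR w. rich v) \<longleftrightarrow> Sgood n1 n2 n3 n4 n5 n6"
      unfolding w2 by (rule good_iff[OF ba n len])
    moreover have "compl a b w \<in> T_closure a b \<longleftrightarrow> Sgood n1 n2 n3 n4 n5 n6"
      unfolding w2 compl_rw6(2)[OF ab] by (rule T_iff[OF ab n])
    moreover have "w \<notin> T_closure a b"
      unfolding w2 by (rule T_not[OF ab n(1)])
    ultimately show ?thesis by blast
  qed
qed


end
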